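(* For every $j\in\mathbb Z$: (1) $\pi_j:X_j\to X_{j+1}$ is injective on the $1$-skeleton of $X_j$. (2) If $p$ is a $0$-cell of $X_j$ then $\pi_j^{-1}(\pi_j(p))=\{p\}$. (3) For every $p\in X_j$, $(\hat\pi^j)^{-1}(p)$ has at most $3$ points. (4) The link of every cell of $X_j$ contains at most $24$ cells. (5) For every $0$-cell $v$ of $X_j$, any two cells $\sigma,\sigma'$ of $X_j$ containing $v$ can be joined by a sequence $\sigma=\tau_1,\dots,\tau_\ell=\sigma'$ of cells of $X_j$ containing $v$, with $\tau_{i-1}$ and $\tau_i$ sharing a $1$-cell. (6) Every cell of $X_j$ contains at most $9$ open cells. (7) For every $N$ there is $C(N)$, independent of $j$, such that every combinatorial $N$-ball in $X_j$ contains at most $C(N)$ cells. (8) For every $2$-cell $\sigma$ of $X_j$, $(\hat\pi^j)^{-1}(\sigma)$ can be covered by at most $27$ $2$-cells of $Y_j$.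
   Context: Standing construction ($n=2$). Fix an integer $L\ge100$, $m=4$, $m_v=3L$. For $j\in\mathbb Z$, $Y_j$ is the cell complex on $\mathbb R^2$ given by the tiling by rectangles $[am^{-j},(a+1)m^{-j}]\times[bm_v^{-j},(b+1)m_v^{-j}]$, $a,b\in\mathbb Z$. Let $\Phi(x,y)=(m^{-1}x,m_v^{-1}y)$. For $k,\ell\in\mathbb Z$, $i\in\{1,2,3\}$, let $a_{k,\ell,i}=\{k+\tfrac i4\}\times[(3\ell+i-1)m_v^{-1},(3\ell+i)m_v^{-1}]$. $\mathcal R$ is the equivalence relation on $\mathbb R^2$ generated by $p\sim p+(0,m_v^{-1})$ for $p\in a_{k,\ell,i}$. $\Phi^j_*\mathcal R=\{(\Phi^jp,\Phi^jq):(p,q)\in\mathcal R\}$; $\mathcal R_j$ is generated by $\Phi^i_*\mathcal R$, $i<j$. $X_j=\mathbb R^2/\mathcal R_j$, $\hat\pi^j$ the quotient map, $\pi_j:X_j\to X_{j+1}$ the induced map. $X_j$ carries the CW structure whose open cells are the images under $\hat\pi^j$ of open cells of $Y_j$. A combinatorial $N$-ball in $X_j$ is the union of the closed cells reachable from a given cell by a chain (consecutive members intersect) of at most $N$ closed cells. *)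

theory Defs
  imports "HOL-Analysis.Analysis"
begin

(* Standing construction, n = 2, m = 4, m_v = 3L.  Points of R^2 are pairs real \<times> real. *)

definition mv :: "nat \<Rightarrow> real" where
  "mv L = real (3 * L)"

definition Phi :: "nat \<Rightarrow> int \<Rightarrow> real \<times> real \<Rightarrow> real \<times> real" where
  "Phi L j p = (fst p * (4::real) powi (- j), snd p * (mv L) powi (- j))"

definition Ycell :: "nat \<Rightarrow> int \<Rightarrow> nat \<Rightarrow> (real \<times> real) set \<Rightarrow> bool" where
  "Ycell L j d e \<longleftrightarrow> (\<exists>a b :: int.
     let sx = (4::real) powi (- j); sy = (mv L) powi (- j) in
     (d = 0 \<and> e = {(of_int a * sx, of_int b * sy)})
   \<or> (d = 1 \<and> (e = {of_int a * sx <..< (of_int a + 1) * sx} \<times> {of_int b * sy}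
             \<or> e = {of_int a * sx} \<times> {of_int b * sy <..< (of_int b + 1) * sy}))
   \<or> (d = 2 \<and> e = {of_int a * sx <..< (of_int a + 1) * sx} \<times> {of_int b * sy <..< (of_int b + 1) * sy}))"

definition seg :: "nat \<Rightarrow> int \<Rightarrow> int \<Rightarrow> int \<Rightarrow> (real \<times> real) set" where
  "seg L k l i = {of_int k + of_int i / 4} \<times>
      {(of_int (3 * l + i) - 1) / mv L .. of_int (3 * l + i) / mv L}"

definition eqclos :: "('a \<times> 'a) set \<Rightarrow> ('a \<times> 'a) set" where
  "eqclos r = (r \<union> r\<inverse>)\<^sup>*"

definition Rgen :: "nat \<Rightarrow> ((real \<times> real) \<times> (real \<times> real)) set" where
  "Rgen L = {(p, (fst p, snd p + 1 / mv L)) | p k l i. i \<in> {1, 2, 3} \<and> p \<in> seg L k l i}"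

definition Rbase :: "nat \<Rightarrow> ((real \<times> real) \<times> (real \<times> real)) set" where
  "Rbase L = eqclos (Rgen L)"

definition PhiRel :: "nat \<Rightarrow> int \<Rightarrow> ((real \<times> real) \<times> (real \<times> real)) set" where
  "PhiRel L i = map_prod (Phi L i) (Phi L i) ` Rbase L"

definition Rj :: "nat \<Rightarrow> int \<Rightarrow> ((real \<times> real) \<times> (real \<times> real)) set" where
  "Rj L j = eqclos (\<Union>i\<in>{i. i < j}. PhiRel L i)"

(* quotient map hat-pi^j : R^2 \<rightarrow> X_j ; points of X_j are equivalence classes *)
definition hatpi :: "nat \<Rightarrow> int \<Rightarrow> real \<times> real \<Rightarrow> (real \<times> real) set" where
  "hatpi L j p = Rj L j `` {p}"

definition X :: "nat \<Rightarrow> int \<Rightarrow> (real \<times> real) set set" where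
  "X L j = range (hatpi L j)"

definition pij :: "nat \<Rightarrow> int \<Rightarrow> (real \<times> real) set \<Rightarrow> (real \<times> real) set" where
  "pij L j c = Rj L (j + 1) `` c"

definition Xcell :: "nat \<Rightarrow> int \<Rightarrow> nat \<Rightarrow> (real \<times> real) set set \<Rightarrow> bool" where
  "Xcell L j d c \<longleftrightarrow> (\<exists>e. Ycell L j d e \<and> c = hatpi L j ` e)"

definition XcellAny :: "nat \<Rightarrow> int \<Rightarrow> (real \<times> real) set set \<Rightarrow> bool" where
  "XcellAny L j c \<longleftrightarrow> (\<exists>d. Xcell L j d c)"

definition Xclosed :: "nat \<Rightarrow> int \<Rightarrow> (real \<times> real) set set \<Rightarrow> (real \<times> real) set set" where
  "Xclosed L j c = \<Union>{hatpi L j ` closure e | e. (\<exists>d. Ycell L j d e) \<and> hatpi L j ` e = c}"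

definition skel1 :: "nat \<Rightarrow> int \<Rightarrow> (real \<times> real) set set" where
  "skel1 L j = \<Union>{c. Xcell L j 0 c \<or> Xcell L j 1 c}"

definition link :: "nat \<Rightarrow> int \<Rightarrow> (real \<times> real) set set \<Rightarrow> (real \<times> real) set set set" where
  "link L j c = {c'. XcellAny L j c' \<and> c' \<noteq> c \<and> Xclosed L j c \<subseteq> Xclosed L j c'}"

definition cball_comb :: "nat \<Rightarrow> int \<Rightarrow> nat \<Rightarrow> (real \<times> real) set set \<Rightarrow> (real \<times> real) set set" where
  "cball_comb L j N c = \<Union>{Xclosed L j (last cs) | cs.
      cs \<noteq> [] \<and> length cs \<le> N \<and> hd cs = c \<and> (\<forall>t\<in>set cs. XcellAny L j t) \<and>
      (\<forall>i. Suc i < length cs \<longrightarrow> Xclosed L j (cs ! i) \<inter> Xclosed L j (cs ! Suc i) \<noteq> {})}"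

end

theory Submission
  imports Defs
begin

definition ux :: "int \<Rightarrow> real" where "ux j = (4::real) powi (- j)"
definition wy :: "nat \<Rightarrow> int \<Rightarrow> real" where "wy L j = mv L powi (- j)"

lemma mv_pos: "L > 0 \<Longrightarrow> mv L > 0" by (simp add: mv_def)
lemma ux_pos: "ux j > 0" by (simp add: ux_def)
lemma wy_pos: "L > 0 \<Longrightarrow> wy L j > 0" using mv_pos[of L] by (simp add: wy_def)

definition C1 :: "real \<Rightarrow> int \<Rightarrow> bool \<Rightarrow> real set" where
  "C1 s a t = (if t then {of_int a * s <..< (of_int a + 1) * s} else {of_int a * s})"

definition id1 :: "real \<Rightarrow> real \<Rightarrow> int \<times> bool" where
  "id1 s x = (\<lfloor>x / s\<rfloor>, x \<noteq> of_int \<lfloor>x / s\<rfloor> * s)"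

lemma C1_iff:
  assumes s: "s > 0"
  shows "x \<in> C1 s a t \<longleftrightarrow> (a, t) = id1 s x"
proof (cases t)
  case True
  have "x \<in> C1 s a t \<longleftrightarrow> of_int a * s < x \<and> x < (of_int a + 1) * s" using True by (simp add: C1_def)
  also have "\<dots> \<longleftrightarrow> \<lfloor>x / s\<rfloor> = a \<and> x \<noteq> of_int a * s"
  proof
    assume h: "of_int a * s < x \<and> x < (of_int a + 1) * s"
    hence "of_int a < x / s" "x / s < of_int a + 1" using s by (auto simp: field_simps)
    hence "\<lfloor>x / s\<rfloor> = a" by (simp add: floor_eq_iff)
    thus "\<lfloor>x / s\<rfloor> = a \<and> x \<noteq> of_int a * s" using h by auto
  next
    assume h: "\<lfloor>x / s\<rfloor> = a \<and> x \<noteq> of_int a * s"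
    hence "of_int a \<le> x / s" "x / s < of_int a + 1" by linarith+
    hence "of_int a * s \<le> x" "x < (of_int a + 1) * s" using s by (auto simp: field_simps)
    thus "of_int a * s < x \<and> x < (of_int a + 1) * s" using h by auto
  qed
  finally show ?thesis using True by (auto simp: id1_def)
next
  case False
  show ?thesis using False s by (auto simp: C1_def id1_def)
qed

definition faces1 :: "int \<times> bool \<Rightarrow> (int \<times> bool) set" where
  "faces1 k = (if snd k then {(fst k, True), (fst k, False), (fst k + 1, False)} else {(fst k, False)})"

definition star1 :: "int \<times> bool \<Rightarrow> (int \<times> bool) set" where
  "star1 k = (if snd k then {(fst k, True)} else {(fst k, False), (fst k, True), (fst k - 1, True)})"

lemma faces_star1: "k' \<in> faces1 k \<longleftrightarrow> k \<in> star1 k'"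
  by (cases k; cases k'; auto simp: faces1_def star1_def)

lemma closure_C1:
  assumes s: "s > 0"
  shows "closure (C1 s a t) = (if t then {of_int a * s .. (of_int a + 1) * s} else {of_int a * s})"
  using s by (auto simp: C1_def)

lemma closure_C1_iff:
  assumes s: "s > 0"
  shows "x \<in> closure (C1 s a t) \<longleftrightarrow> id1 s x \<in> faces1 (a, t)"
proof (cases t)
  case True
  have "x \<in> closure (C1 s a t) \<longleftrightarrow> x \<in> C1 s a False \<or> x \<in> C1 s a True \<or> x \<in> C1 s (a+1) False"
    using True s by (auto simp: closure_C1 C1_def)
  also have "\<dots> \<longleftrightarrow> id1 s x \<in> faces1 (a, t)"
    using True s by (auto simp: C1_iff[OF s] faces1_def)
  finally show ?thesis .
next
  case False
  thus ?thesis using s C1_iff[OF s, of x a False] by (auto simp: closure_C1 faces1_def C1_def)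
qed

lemma C1_nonempty: "s > 0 \<Longrightarrow> C1 s a t \<noteq> {}"
  by (auto simp: C1_def)

lemma finite_faces1: "finite (faces1 k)" by (simp add: faces1_def)
lemma finite_star1: "finite (star1 k)" by (simp add: star1_def)
lemma card_faces1: "card (faces1 k) \<le> (if snd k then 3 else 1)"
  by (auto simp: faces1_def card_insert_if)
lemma card_star1: "card (star1 k) \<le> (if snd k then 1 else 3)"
  by (auto simp: star1_def card_insert_if)


type_synonym kidx = "(int \<times> bool) \<times> (int \<times> bool)"

definition cellI :: "nat \<Rightarrow> int \<Rightarrow> kidx \<Rightarrow> (real \<times> real) set" where
  "cellI L j k = C1 (ux j) (fst (fst k)) (snd (fst k)) \<times> C1 (wy L j) (fst (snd k)) (snd (snd k))"

definition cid :: "nat \<Rightarrow> int \<Rightarrow> real \<times> real \<Rightarrow> kidx" where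
  "cid L j q = (id1 (ux j) (fst q), id1 (wy L j) (snd q))"

definition faces2 :: "kidx \<Rightarrow> kidx set" where "faces2 k = faces1 (fst k) \<times> faces1 (snd k)"
definition star2 :: "kidx \<Rightarrow> kidx set" where "star2 k = star1 (fst k) \<times> star1 (snd k)"
definition dimK :: "kidx \<Rightarrow> nat" where "dimK k = of_bool (snd (fst k)) + of_bool (snd (snd k))"

lemma cellI_iff: assumes "L > 0" shows "q \<in> cellI L j k \<longleftrightarrow> k = cid L j q"
  using C1_iff[OF ux_pos[of j], where x="fst q" and a="fst (fst k)" and t="snd (fst k)"]
        C1_iff[OF wy_pos[OF \<open>L>0\<close>, of j], where x="snd q" and a="fst (snd k)" and t="snd (snd k)"]
  by (cases q; cases k; auto simp: cellI_def cid_def mem_Times_iff)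

lemma cid_in: "L > 0 \<Longrightarrow> q \<in> cellI L j (cid L j q)"
  using cellI_iff by blast

lemma closure_cellI: "closure (cellI L j k) = closure (C1 (ux j) (fst (fst k)) (snd (fst k))) \<times> closure (C1 (wy L j) (fst (snd k)) (snd (snd k)))"
  by (simp add: cellI_def closure_Times)

lemma closure_cellI_iff: assumes "L > 0" shows "q \<in> closure (cellI L j k) \<longleftrightarrow> cid L j q \<in> faces2 k"
  using closure_C1_iff[OF ux_pos[of j], where x="fst q" and a="fst (fst k)" and t="snd (fst k)"]
        closure_C1_iff[OF wy_pos[OF \<open>L>0\<close>, of j], where x="snd q" and a="fst (snd k)" and t="snd (snd k)"]
  by (cases q; cases k; auto simp: closure_cellI cid_def faces2_def mem_Times_iff)

lemma faces_star2: "k' \<in> faces2 k \<longleftrightarrow> k \<in> star2 k'"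
  by (cases k; cases k'; auto simp: faces2_def star2_def faces_star1)

lemma cellI_nonempty: "L > 0 \<Longrightarrow> cellI L j k \<noteq> {}"
  using C1_nonempty[OF ux_pos] C1_nonempty[OF wy_pos] by (simp add: cellI_def)

lemma finite_faces2: "finite (faces2 k)" by (simp add: faces2_def finite_faces1)
lemma finite_star2: "finite (star2 k)" by (simp add: star2_def finite_star1)

lemma card_faces2: "card (faces2 k) \<le> (if dimK k = 2 then 9 else 3)"
proof -
  have "card (faces2 k) = card (faces1 (fst k)) * card (faces1 (snd k))"
    by (simp add: faces2_def card_cartesian_product)
  moreover have "card (faces1 (fst k)) \<le> (if snd (fst k) then 3 else 1)" by (rule card_faces1)
  moreover have "card (faces1 (snd k)) \<le> (if snd (snd k) then 3 else 1)" by (rule card_faces1)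
  ultimately have "card (faces2 k) \<le> (if snd (fst k) then 3 else 1) * (if snd (snd k) then 3 else 1)"
    by (metis mult_le_mono)
  thus ?thesis by (cases "snd (fst k)"; cases "snd (snd k)"; simp add: dimK_def)
qed

lemma card_faces2_0: "dimK k = 0 \<Longrightarrow> card (faces2 k) \<le> 1"
proof -
  assume "dimK k = 0"
  hence "\<not> snd (fst k)" "\<not> snd (snd k)" by (auto simp: dimK_def)
  thus ?thesis by (cases k) (auto simp: faces2_def faces1_def)
qed

lemma card_star2: "card (star2 k) \<le> (if dimK k = 0 then 9 else 3)"
proof -
  have "card (star2 k) = card (star1 (fst k)) * card (star1 (snd k))"
    by (simp add: star2_def card_cartesian_product)
  moreover have "card (star1 (fst k)) \<le> (if snd (fst k) then 1 else 3)" by (rule card_star1)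
  moreover have "card (star1 (snd k)) \<le> (if snd (snd k) then 1 else 3)" by (rule card_star1)
  ultimately have "card (star2 k) \<le> (if snd (fst k) then 1 else 3) * (if snd (snd k) then 1 else 3)"
    by (metis mult_le_mono)
  thus ?thesis by (cases "snd (fst k)"; cases "snd (snd k)"; simp add: dimK_def)
qed

lemma self_in_star2: "k \<in> star2 k"
  by (cases k) (auto simp: star2_def star1_def)

lemma card_star2_minus: "card (star2 k - {k}) \<le> (if dimK k = 0 then 8 else 3)"
proof -
  have "card (star2 k - {k}) = card (star2 k) - 1"
    using self_in_star2 finite_star2 by (simp add: card_Diff_singleton)
  thus ?thesis using card_star2[of k] by (auto split: if_splits)
qed

lemma Ycell_iff:
  assumes L: "L > 0"
  shows "Ycell L j d e \<longleftrightarrow> (\<exists>k. dimK k = d \<and> e = cellI L j k)"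
proof
  assume "Ycell L j d e"
  thus "\<exists>k. dimK k = d \<and> e = cellI L j k"
    unfolding Ycell_def Let_def
    apply (elim exE disjE conjE)
       apply (rule_tac x="((a,False),(b,False))" in exI; simp add: dimK_def cellI_def C1_def ux_def wy_def)
      apply (rule_tac x="((a,True),(b,False))" in exI; simp add: dimK_def cellI_def C1_def ux_def wy_def)
     apply (rule_tac x="((a,False),(b,True))" in exI; simp add: dimK_def cellI_def C1_def ux_def wy_def)
    apply (rule_tac x="((a,True),(b,True))" in exI; simp add: dimK_def cellI_def C1_def ux_def wy_def)
    done
next
  assume "\<exists>k. dimK k = d \<and> e = cellI L j k"
  then obtain a tx b ty where h: "dimK ((a,tx),(b,ty)) = d" "e = cellI L j ((a,tx),(b,ty))"
    by (metis prod.collapse)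
  show "Ycell L j d e"
    unfolding Ycell_def Let_def
    apply (rule exI[of _ a], rule exI[of _ b])
    using h by (cases tx; cases ty; simp add: dimK_def cellI_def C1_def ux_def wy_def)
qed

lemma Xcell_iff: assumes "L > 0" shows "Xcell L j d c \<longleftrightarrow> (\<exists>k. dimK k = d \<and> c = hatpi L j ` cellI L j k)"
  unfolding Xcell_def Ycell_iff[OF assms] by blast

lemma XcellAny_iff: assumes "L > 0" shows "XcellAny L j c \<longleftrightarrow> (\<exists>k. c = hatpi L j ` cellI L j k)"
  by (auto simp: XcellAny_def Xcell_iff[OF assms])

lemma Xclosed_iff: assumes "L > 0" shows "Xclosed L j c = \<Union>{hatpi L j ` closure (cellI L j k) | k. hatpi L j ` cellI L j k = c}"
proof -
  have "{hatpi L j ` closure e | e. (\<exists>d. Ycell L j d e) \<and> hatpi L j ` e = c} = {hatpi L j ` closure (cellI L j k) | k. hatpi L j ` cellI L j k = c}"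
    unfolding Ycell_iff[OF assms] by blast
  thus ?thesis by (simp add: Xclosed_def)
qed


lemma powi_shift:
  assumes "(x::real) \<noteq> 0" "e \<le> e'"
  shows "x powi (-e) = x ^ nat (e' - e) * x powi (-e')"
proof -
  have "x powi (-e) = x powi ((e' - e) + (-e'))" by simp
  also have "\<dots> = x powi (e' - e) * x powi (-e')" using power_int_add[of x "e'-e" "-e'"] assms by simp
  also have "x powi (e' - e) = x ^ nat (e' - e)" using assms by (simp add: power_int_nonneg_exp)
  finally show ?thesis .
qed

lemma level_unique_aux:
  fixes N1 N2 :: int
  assumes "N2 mod 4 \<noteq> 0" "of_int N1 * (4::real) powi (-e1) = of_int N2 * 4 powi (-e2)" "e1 \<le> e2"
  shows "e1 = e2 \<and> N1 = N2"
proof -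
  define m where "m = nat (e2 - e1)"
  have "(4::real) powi (-e1) = 4 ^ m * 4 powi (-e2)" using powi_shift[of 4 e1 e2] assms by (simp add: m_def)
  with assms(2) have "of_int N1 * 4 ^ m * (4::real) powi (-e2) = of_int N2 * 4 powi (-e2)" by (simp add: mult.assoc)
  hence "of_int N1 * 4 ^ m = (of_int N2 :: real)" by simp
  hence eq: "N1 * 4 ^ m = N2" by (metis of_int_eq_iff of_int_mult of_int_numeral of_int_power)
  have "m = 0"
  proof (rule ccontr)
    assume "m \<noteq> 0"
    then have "(4::int) dvd 4 ^ m" by (simp add: dvd_power)
    hence "4 dvd N2" using eq by (metis dvd_mult)
    thus False using assms(1) by simp
  qed
  thus ?thesis using eq assms(3) by (simp add: m_def)
qed

lemma level_unique:
  fixes N1 N2 :: int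
  assumes "N1 mod 4 \<noteq> 0" "N2 mod 4 \<noteq> 0" "of_int N1 * (4::real) powi (-e1) = of_int N2 * 4 powi (-e2)"
  shows "e1 = e2 \<and> N1 = N2"
proof (cases "e1 \<le> e2")
  case True thus ?thesis using level_unique_aux assms by blast
next
  case False thus ?thesis using level_unique_aux[of N1 N2 e2 e1] assms by auto
qed

definition Hh :: "nat \<Rightarrow> int \<Rightarrow> real" where "Hh L i = mv L powi (-(i+1))"

lemma Hh_pos: "L > 0 \<Longrightarrow> Hh L i > 0" using mv_pos[of L] by (simp add: Hh_def)

definition onblk :: "nat \<Rightarrow> int \<Rightarrow> int \<Rightarrow> int \<Rightarrow> int \<Rightarrow> real \<times> real \<Rightarrow> bool" where
  "onblk L i n l a p \<longleftrightarrow> a \<in> {1,2,3} \<and> fst p = of_int (4*n+a) * 4 powi (-(i+1))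
     \<and> of_int (3*l+a-1) * Hh L i \<le> snd p \<and> snd p \<le> of_int (3*l+a+1) * Hh L i"

definition prx :: "nat \<Rightarrow> int \<Rightarrow> int \<Rightarrow> int \<Rightarrow> int \<Rightarrow> real \<times> real \<Rightarrow> real \<times> real \<Rightarrow> bool" where
  "prx L i n l a p q \<longleftrightarrow> onblk L i n l a p \<and> onblk L i n l a q \<and> (\<exists>t::int. snd q = snd p + of_int t * Hh L i)"

definition PRx :: "nat \<Rightarrow> int \<Rightarrow> ((real \<times> real) \<times> (real \<times> real)) set" where
  "PRx L i = {(p,q). \<exists>n l a. prx L i n l a p q}"

lemma onblk_unique:
  assumes L: "L > 0" and h1: "onblk L i1 n1 l1 a1 p" and h2: "onblk L i2 n2 l2 a2 p"
  shows "i1 = i2 \<and> n1 = n2 \<and> a1 = a2 \<and> l1 = l2"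
proof -
  have a1: "a1 \<in> {1,2,3}" and a2: "a2 \<in> {1,2,3}" using h1 h2 by (auto simp: onblk_def)
  have m1: "(4*n1+a1) mod 4 \<noteq> 0" using a1 by auto
  have m2: "(4*n2+a2) mod 4 \<noteq> 0" using a2 by auto
  have "of_int (4*n1+a1) * (4::real) powi (-(i1+1)) = of_int (4*n2+a2) * 4 powi (-(i2+1))"
    using h1 h2 by (simp add: onblk_def)
  from level_unique[OF m1 m2 this] have ii: "i1 = i2" and nn: "4*n1+a1 = 4*n2+a2" by auto
  have "(4*n1+a1) mod 4 = a1" "(4*n2+a2) mod 4 = a2" using a1 a2 by auto
  hence "a1 = a2" using nn by simp
  moreover have "n1 = n2" using nn \<open>a1 = a2\<close> by simp
  moreover have "l1 = l2"
  proof -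
    have H: "Hh L i1 > 0" using Hh_pos[OF L] .
    have "of_int (3*l1+a1-1) * Hh L i1 \<le> of_int (3*l2+a2+1) * Hh L i1"
      using h1 h2 ii by (auto simp: onblk_def)
    hence x1: "3*l1+a1-1 \<le> 3*l2+a2+1" using H by (simp add: mult_le_cancel_right_pos)
    have "of_int (3*l2+a2-1) * Hh L i1 \<le> of_int (3*l1+a1+1) * Hh L i1"
      using h1 h2 ii by (auto simp: onblk_def)
    hence x2: "3*l2+a2-1 \<le> 3*l1+a1+1" using H by (simp add: mult_le_cancel_right_pos)
    show ?thesis using x1 x2 \<open>a1 = a2\<close> by linarith
  qed
  ultimately show ?thesis using ii by simp
qed

lemma prx_sym: "prx L i n l a p q \<Longrightarrow> prx L i n l a q p"
  unfolding prx_def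
  apply (elim conjE exE)
  subgoal for t by (intro conjI exI[of _ "-t"]) auto
  done

lemma prx_trans:
  assumes L: "L > 0" and h1: "prx L i1 n1 l1 a1 p q" and h2: "prx L i2 n2 l2 a2 q r"
  shows "i1 = i2 \<and> prx L i1 n1 l1 a1 p r"
proof -
  have "onblk L i1 n1 l1 a1 q" "onblk L i2 n2 l2 a2 q" using h1 h2 by (auto simp: prx_def)
  from onblk_unique[OF L this] have e: "i1 = i2" "n1 = n2" "a1 = a2" "l1 = l2" by auto
  obtain t1 where t1: "snd q = snd p + of_int t1 * Hh L i1" using h1 by (auto simp: prx_def)
  obtain t2 where t2: "snd r = snd q + of_int t2 * Hh L i2" using h2 by (auto simp: prx_def)
  have "snd r = snd p + of_int (t1 + t2) * Hh L i1" using t1 t2 e by (simp add: algebra_simps)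
  hence "\<exists>t::int. snd r = snd p + of_int t * Hh L i1" by blast
  thus ?thesis using h1 h2 e by (simp add: prx_def)
qed

lemma PRx_sym: "(p,q) \<in> PRx L i \<Longrightarrow> (q,p) \<in> PRx L i"
  unfolding PRx_def using prx_sym by blast

lemma PRx_trans: "L > 0 \<Longrightarrow> (p,q) \<in> PRx L i1 \<Longrightarrow> (q,r) \<in> PRx L i2 \<Longrightarrow> i1 = i2 \<and> (p,r) \<in> PRx L i1"
  unfolding PRx_def using prx_trans by blast

lemma eqclos_least:
  assumes "r \<subseteq> E" "trans E" "sym E" "Id \<subseteq> E"
  shows "eqclos r \<subseteq> E"
proof -
  have "r \<union> r\<inverse> \<subseteq> E" using assms(1,3) by (auto dest: symD)
  hence "(r \<union> r\<inverse>)\<^sup>* \<subseteq> E\<^sup>*" by (rule rtrancl_mono)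
  also have "E\<^sup>* = E" using assms(2,4) by (auto simp: rtrancl_trancl_reflcl trancl_id)
  finally show ?thesis by (simp add: eqclos_def)
qed

lemma eqclos_sub: "r \<subseteq> eqclos r" by (auto simp: eqclos_def)
lemma eqclos_refl: "(p,p) \<in> eqclos r" by (auto simp: eqclos_def)
lemma eqclos_sym: "(p,q) \<in> eqclos r \<Longrightarrow> (q,p) \<in> eqclos r"
proof -
  assume "(p,q) \<in> eqclos r"
  hence "(q,p) \<in> ((r \<union> r\<inverse>)\<^sup>*)\<inverse>" by (simp add: eqclos_def)
  also have "((r \<union> r\<inverse>)\<^sup>*)\<inverse> = ((r \<union> r\<inverse>)\<inverse>)\<^sup>*" by (rule rtrancl_converse[symmetric])
  also have "(r \<union> r\<inverse>)\<inverse> = r \<union> r\<inverse>" by auto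
  finally show ?thesis by (simp add: eqclos_def)
qed
lemma eqclos_trans: "(p,q) \<in> eqclos r \<Longrightarrow> (q,s) \<in> eqclos r \<Longrightarrow> (p,s) \<in> eqclos r"
  unfolding eqclos_def by (rule rtrancl_trans)

lemma equiv_eqclos: "equiv UNIV (eqclos r)"
  by (rule equivI) (auto simp: refl_on_def eqclos_refl intro: symI transI eqclos_sym eqclos_trans)

lemma Hh0: "Hh L 0 = 1 / mv L" by (simp add: Hh_def power_int_minus inverse_eq_divide)

lemma Rgen_sub: assumes L: "L > 0" shows "Rgen L \<subseteq> PRx L 0"
proof
  fix z assume "z \<in> Rgen L"
  then obtain p k l a where z: "z = (p, (fst p, snd p + 1 / mv L))" and a: "a \<in> {1,2,3}" and p: "p \<in> seg L k l a"
    unfolding Rgen_def by blast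
  have mv: "mv L > 0" using mv_pos[OF L] .
  have fp: "fst p = of_int k + of_int a / 4" and y1: "(of_int (3*l+a) - 1) / mv L \<le> snd p" and y2: "snd p \<le> of_int (3*l+a) / mv L"
    using p by (auto simp: seg_def mem_Times_iff)
  have f: "fst p = of_int (4*k+a) * 4 powi (-(0+1))" using fp by (simp add: power_int_minus)
  have e1: "of_int (3*l+a-1) * Hh L 0 = (of_int (3*l+a) - 1) / mv L" by (simp add: Hh0)
  have e2: "of_int (3*l+a+1) * Hh L 0 = (of_int (3*l+a) + 1) / mv L" by (simp add: Hh0)
  have e3: "(of_int (3*l+a) + 1) / mv L = of_int (3*l+a) / mv L + 1 / mv L" by (simp add: add_divide_distrib)
  have e4: "(of_int (3*l+a) - 1) / mv L = of_int (3*l+a) / mv L - 1 / mv L" by (simp add: diff_divide_distrib)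
  have pos: "1 / mv L > 0" using mv by simp
  have "onblk L 0 k l a p"
    unfolding onblk_def using a f y1 y2 e1 e2 e3 e4 pos by simp
  moreover have "onblk L 0 k l a (fst p, snd p + 1 / mv L)"
    unfolding onblk_def using a f y1 y2 e1 e2 e3 e4 pos by simp
  moreover have "snd p + 1 / mv L = snd p + of_int (1::int) * Hh L 0" by (simp add: Hh0)
  ultimately have "prx L 0 k l a p (fst p, snd p + 1 / mv L)" unfolding prx_def by auto
  thus "z \<in> PRx L 0" unfolding PRx_def z by blast
qed

lemma prx0_up:
  assumes L: "L > 0" and h: "prx L 0 n l a p q" and le: "snd p \<le> snd q"
  shows "(p, q) \<in> Rbase L"
proof -
  have mv: "mv L > 0" using mv_pos[OF L] .
  define H where "H = 1 / mv L"
  have H: "H > 0" using mv by (simp add: H_def)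
  obtain t where t: "snd q = snd p + of_int t * H" using h unfolding prx_def Hh0 H_def by blast
  have a: "a \<in> {1,2,3}" using h by (simp add: prx_def onblk_def)
  have fp: "fst p = of_int (4*n+a) * 4 powi (-(0+1))" and fq0: "fst q = of_int (4*n+a) * 4 powi (-(0+1))"
    using h by (simp_all add: prx_def onblk_def)
  hence fq: "fst q = fst p" by simp
  have bp: "of_int (3*l+a-1) * H \<le> snd p" "snd p \<le> of_int (3*l+a+1) * H"
   and bq: "of_int (3*l+a-1) * H \<le> snd q" "snd q \<le> of_int (3*l+a+1) * H"
    using h unfolding prx_def onblk_def Hh0 H_def by simp_all
  have "0 \<le> of_int t * H" using le t by simp
  hence t0: "t \<ge> 0" using H by (simp add: zero_le_mult_iff)
  have "of_int t * H \<le> of_int (3*l+a+1) * H - of_int (3*l+a-1) * H" using bp bq t by simp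
  also have "\<dots> = 2 * H" by (simp add: algebra_simps)
  finally have "of_int t * H \<le> 2 * H" .
  hence t2: "t \<le> 2" using H by (simp add: mult_le_cancel_right_pos)
  have fpk: "fst p = of_int n + of_int a / 4" using fp by (simp add: power_int_minus)
  have step: "(r, (fst r, snd r + H)) \<in> Rbase L" if r1: "fst r = fst p" and r2: "of_int (3*l+a-1) * H \<le> snd r" and r3: "snd r \<le> of_int (3*l+a) * H" for r
  proof -
    have e1: "of_int (3*l+a-1) * H = (of_int (3*l+a) - 1) / mv L" by (simp add: H_def)
    have e2: "of_int (3*l+a) * H = of_int (3*l+a) / mv L" by (simp add: H_def)
    have "r \<in> seg L n l a" unfolding seg_def mem_Times_iff using r1 r2 r3 fpk e1 e2 by simp
    hence "(r, (fst r, snd r + 1 / mv L)) \<in> Rgen L" unfolding Rgen_def using a by blast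
    thus ?thesis unfolding Rbase_def H_def using eqclos_sub by blast
  qed
  have "t = 0 \<or> t = 1 \<or> t = 2" using t0 t2 by auto
  moreover {
    assume "t = 0"
    hence "q = p" using t fq by (simp add: prod_eq_iff)
    hence ?thesis by (simp add: Rbase_def eqclos_refl)
  } moreover {
    assume t1: "t = 1"
    have "snd p + H \<le> of_int (3*l+a+1) * H" using bq t t1 by simp
    hence "snd p \<le> of_int (3*l+a) * H" by (simp add: algebra_simps)
    hence "(p, (fst p, snd p + H)) \<in> Rbase L" using step bp by blast
    moreover have "q = (fst p, snd p + H)" using t t1 fq by (simp add: prod_eq_iff)
    ultimately have ?thesis by simp
  } moreover {
    assume t2: "t = 2"
    have "snd p + 2 * H \<le> of_int (3*l+a+1) * H" using bq t t2 by simp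
    hence "snd p \<le> of_int (3*l+a-1) * H" by (simp add: algebra_simps)
    hence e: "snd p = of_int (3*l+a-1) * H" using bp by simp
    have e': "of_int (3*l+a-1) * H + H = of_int (3*l+a) * H" by (simp add: algebra_simps)
    have s1: "(p, (fst p, snd p + H)) \<in> Rbase L" using step[of p] e e' H by simp
    have s2: "((fst p, snd p + H), (fst p, snd p + H + H)) \<in> Rbase L"
      using step[of "(fst p, snd p + H)"] e e' H by (simp del: of_int_add of_int_diff)
    have "q = (fst p, snd p + H + H)" using t t2 fq by (simp add: prod_eq_iff)
    hence ?thesis using s1 s2 eqclos_trans unfolding Rbase_def by metis
  }
  ultimately show ?thesis by blast
qed

lemma Rbase_eq: assumes L: "L > 0" shows "Rbase L = Id \<union> PRx L 0"
proof
  show "Rbase L \<subseteq> Id \<union> PRx L 0"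
    unfolding Rbase_def
  proof (rule eqclos_least)
    show "Rgen L \<subseteq> Id \<union> PRx L 0" using Rgen_sub[OF L] by blast
    show "trans (Id \<union> PRx L 0)" by (rule transI) (auto dest: PRx_trans[OF L])
    show "sym (Id \<union> PRx L 0)" by (rule symI) (auto dest: PRx_sym)
  qed auto
next
  show "Id \<union> PRx L 0 \<subseteq> Rbase L"
  proof
    fix z assume zin: "z \<in> Id \<union> PRx L 0"
    obtain p q where z: "z = (p,q)" by (cases z)
    have "p = q \<or> (\<exists>n l a. prx L 0 n l a p q)" using zin unfolding z PRx_def by auto
    moreover {
      assume "p = q" hence "(p,q) \<in> Rbase L" by (simp add: Rbase_def eqclos_refl)
    } moreover {
      fix n l a assume h: "prx L 0 n l a p q"
      have "(p,q) \<in> Rbase L"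
      proof (cases "snd p \<le> snd q")
        case True thus ?thesis using prx0_up[OF L h] by blast
      next
        case False
        hence "(q,p) \<in> Rbase L" using prx0_up[OF L prx_sym[OF h]] by simp
        thus ?thesis by (simp add: Rbase_def eqclos_sym)
      qed
    }
    ultimately show "z \<in> Rbase L" unfolding z by blast
  qed
qed


lemma powi_m1: "(x::real) \<noteq> 0 \<Longrightarrow> x powi (-(i+1)) = x powi (-1) * x powi (-i)"
  using power_int_add[of x "-1" "-i"] by (simp add: add.commute)

lemma Phi_eq: "Phi L i p = (fst p * 4 powi (-i), snd p * mv L powi (-i))"
  by (simp add: Phi_def)

lemma onblk_Phi:
  assumes L: "L > 0"
  shows "onblk L i n l a (Phi L i p) \<longleftrightarrow> onblk L 0 n l a p"
proof -
  define \<alpha> where "\<alpha> = (4::real) powi (-i)"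
  define \<beta> where "\<beta> = mv L powi (-i)"
  define c0 where "c0 = (4::real) powi (-(0+1))"
  have \<alpha>: "\<alpha> > 0" by (simp add: \<alpha>_def)
  have \<beta>: "\<beta> > 0" using mv_pos[OF L] by (simp add: \<beta>_def)
  have f4: "(4::real) powi (-(i+1)) = c0 * \<alpha>" using powi_m1[of 4 i] by (simp add: \<alpha>_def c0_def)
  have fH: "Hh L i = Hh L 0 * \<beta>" using powi_m1[of "mv L" i] mv_pos[OF L] by (simp add: \<beta>_def Hh_def)
  have F: "(fst p * \<alpha> = N * (c0 * \<alpha>)) \<longleftrightarrow> fst p = N * c0" for N :: real
  proof -
    have "N * (c0 * \<alpha>) = (N * c0) * \<alpha>" by (simp add: mult.assoc)
    thus ?thesis using \<alpha> by simp
  qed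
  have G1: "(x * (Hh L 0 * \<beta>) \<le> snd p * \<beta>) \<longleftrightarrow> x * Hh L 0 \<le> snd p" for x :: real
  proof -
    have "x * (Hh L 0 * \<beta>) = (x * Hh L 0) * \<beta>" by (simp add: mult.assoc)
    thus ?thesis using \<beta> by (simp add: mult_le_cancel_right_pos)
  qed
  have G2: "(snd p * \<beta> \<le> x * (Hh L 0 * \<beta>)) \<longleftrightarrow> snd p \<le> x * Hh L 0" for x :: real
  proof -
    have "x * (Hh L 0 * \<beta>) = (x * Hh L 0) * \<beta>" by (simp add: mult.assoc)
    thus ?thesis using \<beta> by (simp add: mult_le_cancel_right_pos)
  qed
  have "onblk L i n l a (Phi L i p) \<longleftrightarrow> a \<in> {1,2,3} \<and> fst p * \<alpha> = of_int (4*n+a) * (c0 * \<alpha>)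
     \<and> of_int (3*l+a-1) * (Hh L 0 * \<beta>) \<le> snd p * \<beta> \<and> snd p * \<beta> \<le> of_int (3*l+a+1) * (Hh L 0 * \<beta>)"
    unfolding onblk_def Phi_eq fst_conv snd_conv f4 fH \<alpha>_def \<beta>_def by (rule refl)
  also have "\<dots> \<longleftrightarrow> onblk L 0 n l a p"
    unfolding F G1 G2 unfolding onblk_def c0_def by (rule refl)
  finally show ?thesis .
qed

lemma prx_Phi:
  assumes L: "L > 0"
  shows "prx L i n l a (Phi L i p) (Phi L i q) \<longleftrightarrow> prx L 0 n l a p q"
proof -
  define \<beta> where "\<beta> = mv L powi (-i)"
  have \<beta>: "\<beta> > 0" using mv_pos[OF L] by (simp add: \<beta>_def)
  have fH: "Hh L i = Hh L 0 * \<beta>" using powi_m1[of "mv L" i] mv_pos[OF L] by (simp add: \<beta>_def Hh_def)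
  have D: "(snd q * \<beta> = snd p * \<beta> + x * (Hh L 0 * \<beta>)) \<longleftrightarrow> snd q = snd p + x * Hh L 0" for x
  proof -
    have "snd p * \<beta> + x * (Hh L 0 * \<beta>) = (snd p + x * Hh L 0) * \<beta>" by (simp add: algebra_simps)
    thus ?thesis using \<beta> by simp
  qed
  show ?thesis
    unfolding prx_def onblk_Phi[OF L] by (simp add: Phi_eq fH \<beta>_def[symmetric] D)
qed

definition PhiInv :: "nat \<Rightarrow> int \<Rightarrow> real \<times> real \<Rightarrow> real \<times> real" where
  "PhiInv L i p = (fst p * 4 powi i, snd p * mv L powi i)"

lemma Phi_PhiInv: "L > 0 \<Longrightarrow> Phi L i (PhiInv L i p) = p"
  using mv_pos[of L] by (simp add: Phi_eq PhiInv_def mult.assoc power_int_minus)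

lemma PhiRel_eq: assumes L: "L > 0" shows "PhiRel L i = Id \<union> PRx L i"
proof
  show "PhiRel L i \<subseteq> Id \<union> PRx L i"
  proof
    fix z assume "z \<in> PhiRel L i"
    then obtain w where w: "w \<in> Rbase L" "z = map_prod (Phi L i) (Phi L i) w"
      unfolding PhiRel_def by (rule imageE)
    obtain p q where pqw: "w = (p,q)" by (cases w)
    have z: "z = (Phi L i p, Phi L i q)" and pq: "(p,q) \<in> Rbase L" using w pqw by simp_all
    from pq have "(p,q) \<in> Id \<union> PRx L 0" unfolding Rbase_eq[OF L] .
    hence "p = q \<or> (\<exists>n l a. prx L 0 n l a p q)" unfolding PRx_def by blast
    thus "z \<in> Id \<union> PRx L i"
    proof
      assume "p = q" thus ?thesis unfolding z by simp
    next
      assume "\<exists>n l a. prx L 0 n l a p q"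
      then obtain n l a where "prx L 0 n l a p q" by blast
      hence "prx L i n l a (Phi L i p) (Phi L i q)" using prx_Phi[OF L] by blast
      hence "z \<in> PRx L i" unfolding z PRx_def by blast
      thus ?thesis by blast
    qed
  qed
next
  show "Id \<union> PRx L i \<subseteq> PhiRel L i"
  proof
    fix z assume zin: "z \<in> Id \<union> PRx L i"
    obtain p q where z: "z = (p,q)" by (cases z)
    define p0 where "p0 = PhiInv L i p"
    define q0 where "q0 = PhiInv L i q"
    have pp: "p = Phi L i p0" "q = Phi L i q0" using Phi_PhiInv[OF L] by (simp_all add: p0_def q0_def)
    have "p = q \<or> (\<exists>n l a. prx L i n l a p q)" using zin unfolding z PRx_def by blast
    hence "(p0,q0) \<in> Id \<union> PRx L 0"
    proof
      assume "p = q" thus ?thesis by (simp add: p0_def q0_def)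
    next
      assume "\<exists>n l a. prx L i n l a p q"
      then obtain n l a where "prx L i n l a p q" by blast
      hence "prx L 0 n l a p0 q0" using prx_Phi[OF L] pp by metis
      thus ?thesis unfolding PRx_def by blast
    qed
    hence "(p0,q0) \<in> Rbase L" using Rbase_eq[OF L] by simp
    hence "map_prod (Phi L i) (Phi L i) (p0,q0) \<in> PhiRel L i" unfolding PhiRel_def by (rule imageI)
    thus "z \<in> PhiRel L i" unfolding z pp by simp
  qed
qed

definition QQ :: "nat \<Rightarrow> int \<Rightarrow> ((real \<times> real) \<times> (real \<times> real)) set" where
  "QQ L j = Id \<union> (\<Union>i\<in>{i. i < j}. PRx L i)"

lemma Rj_eq: assumes L: "L > 0" shows "Rj L j = QQ L j"
proof
  show "Rj L j \<subseteq> QQ L j"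
    unfolding Rj_def
  proof (rule eqclos_least)
    show "(\<Union>i\<in>{i. i < j}. PhiRel L i) \<subseteq> QQ L j" unfolding QQ_def PhiRel_eq[OF L] by blast
    show "trans (QQ L j)" unfolding QQ_def
      by (rule transI) (auto dest: PRx_trans[OF L])
    show "sym (QQ L j)" unfolding QQ_def by (rule symI) (auto dest: PRx_sym)
  qed (auto simp: QQ_def)
next
  show "QQ L j \<subseteq> Rj L j"
  proof
    fix z assume "z \<in> QQ L j"
    then consider "z \<in> Id" | i where "i < j" "z \<in> PRx L i" unfolding QQ_def by blast
    thus "z \<in> Rj L j"
    proof cases
      case 1 thus ?thesis by (auto simp: Rj_def eqclos_refl)
    next
      case 2
      hence "z \<in> (\<Union>i\<in>{i. i < j}. PhiRel L i)" unfolding PhiRel_eq[OF L] by blast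
      thus ?thesis unfolding Rj_def by (rule subsetD[OF eqclos_sub])
    qed
  qed
qed

lemma Rj_iff: "L > 0 \<Longrightarrow> (p,q) \<in> Rj L j \<longleftrightarrow> p = q \<or> (\<exists>i<j. \<exists>n l a. prx L i n l a p q)"
  by (auto simp: Rj_eq QQ_def PRx_def)

lemma equiv_Rj: "equiv UNIV (Rj L j)" unfolding Rj_def by (rule equiv_eqclos)

lemma Rj_refl: "(p,p) \<in> Rj L j" unfolding Rj_def by (rule eqclos_refl)
lemma Rj_sym: "(p,q) \<in> Rj L j \<Longrightarrow> (q,p) \<in> Rj L j" unfolding Rj_def by (rule eqclos_sym)
lemma Rj_trans: "(p,q) \<in> Rj L j \<Longrightarrow> (q,r) \<in> Rj L j \<Longrightarrow> (p,r) \<in> Rj L j" unfolding Rj_def by (rule eqclos_trans)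

lemma hatpi_eq_iff: "hatpi L j p = hatpi L j q \<longleftrightarrow> (p,q) \<in> Rj L j"
  unfolding hatpi_def using equiv_class_eq_iff[OF equiv_Rj] by blast

lemma Rj_mono: "L > 0 \<Longrightarrow> j \<le> j' \<Longrightarrow> (p,q) \<in> Rj L j \<Longrightarrow> (p,q) \<in> Rj L j'"
  by (auto simp: Rj_iff)


lemma Hh_units:
  assumes L: "L > 0" and ij: "i < j"
  shows "Hh L i = of_int ((3 * int L) ^ nat (j - i - 1)) * wy L j"
proof -
  have "Hh L i = mv L ^ nat (j - (i+1)) * mv L powi (-j)"
    unfolding Hh_def using powi_shift[of "mv L" "i+1" j] mv_pos[OF L] ij by simp
  moreover have "nat (j - (i+1)) = nat (j - i - 1)" by simp
  hence "mv L ^ nat (j - (i+1)) = of_int ((3 * int L) ^ nat (j - i - 1))"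
    by (simp add: mv_def)
  ultimately show ?thesis by (simp add: wy_def)
qed

lemma ux_units:
  assumes ij: "i < j"
  shows "(4::real) powi (-(i+1)) = of_int (4 ^ nat (j - i - 1)) * ux j"
proof -
  have "(4::real) powi (-(i+1)) = 4 ^ nat (j - (i+1)) * 4 powi (-j)"
    using powi_shift[of 4 "i+1" j] ij by simp
  thus ?thesis by (simp add: ux_def)
qed

definition blkJ :: "nat \<Rightarrow> int \<Rightarrow> int \<Rightarrow> int \<Rightarrow> int \<Rightarrow> real \<times> real \<Rightarrow> bool" where
  "blkJ L j Xn c M p \<longleftrightarrow> fst p = of_int Xn * ux j \<and> of_int (c*M) * wy L j \<le> snd p \<and> snd p \<le> of_int ((c+2)*M) * wy L j"

lemma prx_units:
  assumes L: "L > 0" and ij: "i < j" and h: "prx L i n l a p q"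
  shows "\<exists>Xn c M. M \<ge> 1 \<and> blkJ L j Xn c M p \<and> blkJ L j Xn c M q \<and> (\<exists>t. snd q = snd p + of_int (t*M) * wy L j)
     \<and> (\<forall>p' q'. blkJ L j Xn c M p' \<and> blkJ L j Xn c M q' \<and> (\<exists>t. snd q' = snd p' + of_int (t*M) * wy L j) \<longrightarrow> prx L i n l a p' q')"
proof -
  define M where "M = (3 * int L) ^ nat (j - i - 1)"
  define Xn where "Xn = (4*n+a) * 4 ^ nat (j - i - 1)"
  define c where "c = 3*l+a-1"
  have "1 \<le> 3 * int L" using L by simp
  hence M1: "M \<ge> 1" unfolding M_def by (rule one_le_power)
  have a: "a \<in> {1,2,3}" using h by (simp add: prx_def onblk_def)
  have HM: "Hh L i = of_int M * wy L j" using Hh_units[OF L ij] by (simp add: M_def)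
  have UX: "of_int (4*n+a) * (4::real) powi (-(i+1)) = of_int Xn * ux j"
    using ux_units[OF ij] by (simp add: Xn_def)
  have ob: "onblk L i n l a r \<longleftrightarrow> blkJ L j Xn c M r" for r
  proof -
    have e1: "of_int (3*l+a-1) * Hh L i = of_int (c*M) * wy L j" by (simp add: HM c_def)
    have e2: "of_int (3*l+a+1) * Hh L i = of_int ((c+2)*M) * wy L j" by (simp add: HM c_def)
    show ?thesis unfolding onblk_def blkJ_def UX e1 e2 using a by simp
  qed
  have tt: "(\<exists>t::int. snd r' = snd r + of_int t * Hh L i) \<longleftrightarrow> (\<exists>t. snd r' = snd r + of_int (t*M) * wy L j)" for r r'
    by (simp add: HM mult.assoc)
  show ?thesis
    apply (rule exI[of _ Xn], rule exI[of _ c], rule exI[of _ M])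
    using h M1 unfolding prx_def ob tt by blast
qed

lemma blk1:
  fixes w y :: real and b A B :: int
  assumes w: "w > 0" and h1: "of_int b * w < y" "y < (of_int b + 1) * w" and h2: "of_int A * w \<le> y" "y \<le> of_int B * w"
  shows "A \<le> b \<and> b + 1 \<le> B"
proof -
  have "of_int A * w < of_int (b+1) * w" using h1 h2 by simp
  hence "A < b + 1" using w by (simp add: mult_less_cancel_right_pos)
  moreover have "of_int b * w < of_int B * w" using h1 h2 by simp
  hence "b < B" using w by (simp add: mult_less_cancel_right_pos)
  ultimately show ?thesis by simp
qed

lemma blk1_closed:
  fixes w z :: real and b A B :: int
  assumes w: "w > 0" and "A \<le> b" "b + 1 \<le> B" and "of_int b * w \<le> z" "z \<le> (of_int b + 1) * w"
  shows "of_int A * w \<le> z \<and> z \<le> of_int B * w"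
proof -
  have "of_int A * w \<le> of_int b * w" using assms by (simp add: mult_right_mono)
  moreover have "(of_int b + 1) * w \<le> of_int B * w"
  proof -
    have "real_of_int (b+1) \<le> of_int B" using assms by linarith
    thus ?thesis using w by (simp add: mult_right_mono)
  qed
  ultimately show ?thesis using assms by linarith
qed

definition shk :: "kidx \<Rightarrow> int \<Rightarrow> kidx" where
  "shk k d = (fst k, (fst (snd k) + d, snd (snd k)))"

lemma dimK_shk[simp]: "dimK (shk k d) = dimK k" by (simp add: shk_def dimK_def)
lemma shk_0[simp]: "shk k 0 = k" by (simp add: shk_def)

lemma trans_img: "((+) v) ` S = {x. x - v \<in> S}" for v :: "'a::ab_group_add"
proof (rule set_eqI)
  fix x show "x \<in> (+) v ` S \<longleftrightarrow> x \<in> {x. x - v \<in> S}"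
  proof
    assume "x \<in> (+) v ` S" then obtain z where "z \<in> S" "x = v + z" by blast
    thus "x \<in> {x. x - v \<in> S}" by simp
  next
    assume "x \<in> {x. x - v \<in> S}"
    hence "v + (x - v) \<in> (+) v ` S" by blast
    thus "x \<in> (+) v ` S" by simp
  qed
qed

lemma C1_shift: "y \<in> C1 w (b + d) t \<longleftrightarrow> y - of_int d * w \<in> C1 w b t"
  by (auto simp: C1_def algebra_simps)

lemma cellI_shk: "cellI L j (shk k d) = ((+) (0, of_int d * wy L j)) ` cellI L j k"
  unfolding trans_img
  by (auto simp: cellI_def shk_def mem_Times_iff C1_shift)

lemma closure_cellI_shk: "closure (cellI L j (shk k d)) = ((+) (0, of_int d * wy L j)) ` closure (cellI L j k)"
  unfolding cellI_shk by (rule closure_translation)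

lemma x_open_not_int:
  assumes "ux j > 0" "x \<in> C1 (ux j) a True" "x = of_int Xn * ux j"
  shows False
proof -
  have "of_int a * ux j < of_int Xn * ux j" "of_int Xn * ux j < of_int (a + 1) * ux j"
    using assms by (auto simp: C1_def)
  hence "a < Xn" "Xn < a + 1" using assms(1) by (simp_all add: mult_less_cancel_right_pos)
  thus False by simp
qed

lemma cellular_prx:
  assumes L: "L > 0" and ij: "i < j" and h: "prx L i n l a p q" and pk: "p \<in> cellI L j k"
  shows "\<not> snd (fst k) \<and> (\<exists>d. q \<in> cellI L j (shk k d) \<and> (\<forall>z \<in> closure (cellI L j k). (z, z + (0, of_int d * wy L j)) \<in> Rj L j))"
proof -
  obtain Xn c M where M1: "M \<ge> 1" and bp: "blkJ L j Xn c M p" and bq: "blkJ L j Xn c M q"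
    and tq: "\<exists>t. snd q = snd p + of_int (t*M) * wy L j"
    and gen: "\<And>p' q'. blkJ L j Xn c M p' \<Longrightarrow> blkJ L j Xn c M q' \<Longrightarrow> (\<exists>t. snd q' = snd p' + of_int (t*M) * wy L j) \<Longrightarrow> prx L i n l a p' q'"
    using prx_units[OF L ij h] by blast
  obtain t where t: "snd q = snd p + of_int (t*M) * wy L j" using tq by blast
  obtain a0 tx b0 ty where k: "k = ((a0,tx),(b0,ty))" by (metis prod.collapse)
  have w: "wy L j > 0" using wy_pos[OF L] .
  have u: "ux j > 0" using ux_pos .
  have px: "fst p \<in> C1 (ux j) a0 tx" and py: "snd p \<in> C1 (wy L j) b0 ty"
    using pk by (auto simp: k cellI_def mem_Times_iff)
  have fpX: "fst p = of_int Xn * ux j" using bp by (simp add: blkJ_def)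
  have ntx: "\<not> tx"
  proof
    assume tx
    thus False using x_open_not_int[OF u _ fpX] px by simp
  qed
  have fpa: "fst p = of_int a0 * ux j" using px ntx by (simp add: C1_def)
  have fq: "fst q = fst p" using bp bq by (simp add: blkJ_def)
  define d where "d = t * M"
  have qin: "q \<in> cellI L j (shk k d)"
  proof -
    have "snd q - of_int d * wy L j = snd p" using t by (simp add: d_def)
    hence "snd q \<in> C1 (wy L j) (b0 + d) ty" using py C1_shift by metis
    moreover have "fst q \<in> C1 (ux j) a0 tx" using px fq by simp
    ultimately show ?thesis by (simp add: k shk_def cellI_def mem_Times_iff)
  qed
  have cl: "\<forall>z \<in> closure (cellI L j k). (z, z + (0, of_int d * wy L j)) \<in> Rj L j"
  proof
    fix z assume zc: "z \<in> closure (cellI L j k)"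
    have zx: "fst z = fst p" and zy: "snd z \<in> closure (C1 (wy L j) b0 ty)"
      using zc ntx fpa by (auto simp: k closure_cellI closure_C1[OF u] mem_Times_iff)
    have bpy: "of_int (c*M) * wy L j \<le> snd p" "snd p \<le> of_int ((c+2)*M) * wy L j"
      using bp by (auto simp: blkJ_def)
    have bqy: "of_int (c*M) * wy L j \<le> snd q" "snd q \<le> of_int ((c+2)*M) * wy L j"
      using bq by (auto simp: blkJ_def)
    have zb: "of_int (c*M) * wy L j \<le> snd z \<and> snd z \<le> of_int ((c+2)*M) * wy L j"
    proof (cases ty)
      case True
      have "of_int b0 * wy L j < snd p" "snd p < (of_int b0 + 1) * wy L j" using py True by (auto simp: C1_def)
      from blk1[OF w this bpy] have "c*M \<le> b0" "b0 + 1 \<le> (c+2)*M" by auto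
      moreover have "of_int b0 * wy L j \<le> snd z" "snd z \<le> (of_int b0 + 1) * wy L j"
        using zy True w by (auto simp: closure_C1)
      ultimately show ?thesis using blk1_closed[OF w] by blast
    next
      case False
      thus ?thesis using zy py bpy w by (simp add: closure_C1 C1_def)
    qed
    have zb': "of_int (c*M) * wy L j \<le> snd z + of_int d * wy L j \<and> snd z + of_int d * wy L j \<le> of_int ((c+2)*M) * wy L j"
    proof (cases ty)
      case True
      have "snd q \<in> C1 (wy L j) (b0 + d) ty" using qin by (simp add: k shk_def cellI_def mem_Times_iff)
      hence "of_int (b0+d) * wy L j < snd q" "snd q < (of_int (b0+d) + 1) * wy L j" using True by (auto simp: C1_def)
      from blk1[OF w this bqy] have "c*M \<le> b0+d" "b0 + d + 1 \<le> (c+2)*M" by auto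
      moreover have "of_int (b0+d) * wy L j \<le> snd z + of_int d * wy L j" "snd z + of_int d * wy L j \<le> (of_int (b0+d) + 1) * wy L j"
        using zy True w by (auto simp: closure_C1 algebra_simps)
      ultimately show ?thesis using blk1_closed[OF w, of "c*M" "b0+d" "(c+2)*M"] by blast
    next
      case False
      have "snd p = of_int b0 * wy L j" using py False by (simp add: C1_def)
      hence "snd z = snd p" using zy False by (simp add: closure_C1[OF w] C1_def)
      hence "snd z + of_int d * wy L j = snd q" using t by (simp add: d_def)
      thus ?thesis using bqy by simp
    qed
    have "blkJ L j Xn c M z" using zb zx fpX by (simp add: blkJ_def)
    moreover have "blkJ L j Xn c M (z + (0, of_int d * wy L j))" using zb' zx fpX by (simp add: blkJ_def)
    moreover have "\<exists>t'. snd (z + (0, of_int d * wy L j)) = snd z + of_int (t'*M) * wy L j"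
      by (rule exI[of _ t]) (simp add: d_def)
    ultimately have "prx L i n l a z (z + (0, of_int d * wy L j))" using gen by blast
    thus "(z, z + (0, of_int d * wy L j)) \<in> Rj L j" using Rj_iff[OF L] ij by blast
  qed
  show ?thesis using ntx qin cl k by auto
qed

lemma cellular:
  assumes L: "L > 0" and pq: "(p,q) \<in> Rj L j" and pk: "p \<in> cellI L j k"
  shows "\<exists>d. q \<in> cellI L j (shk k d) \<and> (\<forall>z \<in> closure (cellI L j k). (z, z + (0, of_int d * wy L j)) \<in> Rj L j)"
proof (cases "p = q")
  case True
  thus ?thesis using pk by (intro exI[of _ 0]) (simp add: Rj_refl zero_prod_def[symmetric])
next
  case False
  then obtain i n l a where "i < j" "prx L i n l a p q" using pq Rj_iff[OF L] by blast
  thus ?thesis using cellular_prx[OF L _ _ pk] by blast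
qed

lemma hatpi_shift_img:
  assumes "\<forall>z \<in> S. (z, z + v) \<in> Rj L j"
  shows "hatpi L j ` ((+) v ` S) = hatpi L j ` S"
proof -
  have "hatpi L j (v + z) = hatpi L j z" if "z \<in> S" for z
    using assms that hatpi_eq_iff Rj_sym by (metis add.commute)
  thus ?thesis by (auto simp: image_image intro: image_eqI)
qed

lemma cell_glue:
  assumes L: "L > 0" and pq: "(p,q) \<in> Rj L j" and pk: "p \<in> cellI L j k" and qk: "q \<in> cellI L j k'"
  shows "dimK k' = dimK k \<and> hatpi L j ` cellI L j k' = hatpi L j ` cellI L j k
       \<and> hatpi L j ` closure (cellI L j k') = hatpi L j ` closure (cellI L j k)"
proof -
  obtain d where qd: "q \<in> cellI L j (shk k d)" and cl: "\<forall>z \<in> closure (cellI L j k). (z, z + (0, of_int d * wy L j)) \<in> Rj L j"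
    using cellular[OF L pq pk] by blast
  have kk: "k' = shk k d" using qd qk by (simp add: cellI_iff[OF L])
  have cl2: "\<forall>z \<in> cellI L j k. (z, z + (0, of_int d * wy L j)) \<in> Rj L j"
    using cl closure_subset by blast
  show ?thesis
    unfolding kk closure_cellI_shk unfolding cellI_shk
    using hatpi_shift_img[OF cl] hatpi_shift_img[OF cl2] by simp
qed

lemma class_eq_hatpi: "{q. (p,q) \<in> Rj L j} = {q. hatpi L j q = hatpi L j p}"
  using hatpi_eq_iff Rj_sym by blast

lemma class_card:
  assumes L: "L > 0"
  shows "finite {q. (p,q) \<in> Rj L j} \<and> card {q. (p,q) \<in> Rj L j} \<le> 3"
proof (cases "\<forall>q. (p,q) \<in> Rj L j \<longrightarrow> q = p")
  case True
  hence "{q. (p,q) \<in> Rj L j} = {p}" using Rj_refl by blast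
  thus ?thesis by simp
next
  case False
  then obtain q0 where "(p,q0) \<in> Rj L j" "q0 \<noteq> p" by blast
  then obtain i n l a where ij: "i < j" and h0: "prx L i n l a p q0" using Rj_iff[OF L] by metis
  have obp: "onblk L i n l a p" using h0 by (simp add: prx_def)
  define H where "H = Hh L i"
  have H: "H > 0" using Hh_pos[OF L] by (simp add: H_def)
  define c where "c = 3*l+a-1"
  have bp: "of_int c * H \<le> snd p" "snd p \<le> (of_int c + 2) * H"
    using obp by (auto simp: onblk_def H_def c_def)
  define T0 where "T0 = \<lceil>of_int c - snd p / H\<rceil>"
  have sub: "{q. (p,q) \<in> Rj L j} \<subseteq> (\<lambda>t. (fst p, snd p + of_int t * H)) ` {T0..T0+2}"
  proof
    fix q assume "q \<in> {q. (p,q) \<in> Rj L j}"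
    hence pq: "(p,q) \<in> Rj L j" by simp
    have hq: "prx L i n l a p q"
    proof (cases "q = p")
      case True thus ?thesis using obp by (auto simp: prx_def intro: exI[of _ 0])
    next
      case False
      then obtain i2 n2 l2 a2 where "prx L i2 n2 l2 a2 p q" using pq Rj_iff[OF L] by metis
      moreover have "onblk L i2 n2 l2 a2 p" using calculation by (simp add: prx_def)
      from onblk_unique[OF L obp this] have "i2 = i" "n2 = n" "l2 = l" "a2 = a" by auto
      ultimately show ?thesis by simp
    qed
    obtain t where t: "snd q = snd p + of_int t * H" using hq by (auto simp: prx_def H_def)
    have fq: "fst q = fst p" using hq by (simp add: prx_def onblk_def)
    have bq: "of_int c * H \<le> snd q" "snd q \<le> (of_int c + 2) * H"
      using hq by (auto simp: prx_def onblk_def H_def c_def)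
    have "of_int c * H - snd p \<le> of_int t * H" using bq t by simp
    hence "(of_int c * H - snd p) / H \<le> of_int t" using H by (simp add: divide_le_eq)
    hence l1: "of_int c - snd p / H \<le> of_int t" using H by (simp add: diff_divide_distrib)
    have "of_int t * H \<le> (of_int c + 2) * H - snd p" using bq t by simp
    hence "of_int t \<le> ((of_int c + 2) * H - snd p) / H" using H by (simp add: le_divide_eq)
    hence l2: "of_int t \<le> of_int c + 2 - snd p / H" using H by (simp add: diff_divide_distrib)
    have "T0 \<le> t" unfolding T0_def using l1 by (simp add: ceiling_le_iff)
    moreover have "of_int c - snd p / H \<le> of_int T0" unfolding T0_def by (rule le_of_int_ceiling)
    hence "t \<le> T0 + 2" using l2 by linarith
    ultimately have "t \<in> {T0..T0+2}" by simp
    moreover have "q = (fst p, snd p + of_int t * H)" using t fq by (simp add: prod_eq_iff)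
    ultimately show "q \<in> (\<lambda>t. (fst p, snd p + of_int t * H)) ` {T0..T0+2}" by blast
  qed
  have c3: "card {T0..T0+2} = 3" by simp
  have "card ((\<lambda>t. (fst p, snd p + of_int t * H)) ` {T0..T0+2}) \<le> card {T0..T0+2}"
    by (rule card_image_le) simp
  hence "card ((\<lambda>t. (fst p, snd p + of_int t * H)) ` {T0..T0+2}) \<le> 3" using c3 by simp
  thus ?thesis using sub by (meson card_mono finite_atLeastAtMost_int finite_imageI finite_subset le_trans)
qed

lemma face2_singleton:
  assumes L: "L > 0" and pk: "p \<in> cellI L j k" and tx: "snd (fst k)" and pq: "(p,q) \<in> Rj L j"
  shows "q = p"
proof (rule ccontr)
  assume "q \<noteq> p"
  then obtain i n l a where "i < j" "prx L i n l a p q" using pq Rj_iff[OF L] by metis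
  from cellular_prx[OF L this pk] tx show False by simp
qed


definition Gset :: "nat \<Rightarrow> int \<Rightarrow> kidx \<Rightarrow> kidx set" where
  "Gset L j k = {k'. hatpi L j ` cellI L j k' = hatpi L j ` cellI L j k}"

lemma Gset_sub:
  assumes L: "L > 0" and pk: "p \<in> cellI L j k"
  shows "Gset L j k \<subseteq> cid L j ` {q. (p,q) \<in> Rj L j}"
proof
  fix k' assume "k' \<in> Gset L j k"
  hence "hatpi L j p \<in> hatpi L j ` cellI L j k'" using pk by (auto simp: Gset_def)
  then obtain r where r: "r \<in> cellI L j k'" "hatpi L j r = hatpi L j p" by auto
  hence "(p,r) \<in> Rj L j" using hatpi_eq_iff Rj_sym by blast
  moreover have "k' = cid L j r" using r cellI_iff[OF L] by blast
  ultimately show "k' \<in> cid L j ` {q. (p,q) \<in> Rj L j}" by blast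
qed

lemma Gset_card:
  assumes L: "L > 0"
  shows "finite (Gset L j k) \<and> card (Gset L j k) \<le> 3"
proof -
  obtain p where pk: "p \<in> cellI L j k" using cellI_nonempty[OF L] by blast
  have s: "Gset L j k \<subseteq> cid L j ` {q. (p,q) \<in> Rj L j}" by (rule Gset_sub[OF L pk])
  have f: "finite {q. (p,q) \<in> Rj L j}" "card {q. (p,q) \<in> Rj L j} \<le> 3" using class_card[OF L] by auto
  have "card (Gset L j k) \<le> card (cid L j ` {q. (p,q) \<in> Rj L j})" using s f by (simp add: card_mono)
  also have "\<dots> \<le> card {q. (p,q) \<in> Rj L j}" using f by (simp add: card_image_le)
  finally show ?thesis using f s finite_subset by auto
qed

lemma card_star2_9: "card (star2 k) \<le> 9" using card_star2[of k] by (simp split: if_splits)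

lemma Gset_self: "k \<in> Gset L j k" by (simp add: Gset_def)

lemma Gset_closure:
  assumes L: "L > 0" and "k' \<in> Gset L j k"
  shows "hatpi L j ` closure (cellI L j k') = hatpi L j ` closure (cellI L j k) \<and> dimK k' = dimK k"
proof -
  obtain p where pk: "p \<in> cellI L j k" using cellI_nonempty[OF L] by blast
  from Gset_sub[OF L pk] assms(2) obtain r where "(p,r) \<in> Rj L j" "k' = cid L j r" by blast
  moreover have "r \<in> cellI L j (cid L j r)" by (rule cid_in[OF L])
  ultimately show ?thesis using cell_glue[OF L _ pk] by metis
qed

lemma XC:
  assumes L: "L > 0"
  shows "Xclosed L j (hatpi L j ` cellI L j k) = hatpi L j ` closure (cellI L j k)"
proof -
  have "x \<in> {hatpi L j ` closure (cellI L j k') | k'. hatpi L j ` cellI L j k' = hatpi L j ` cellI L j k}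
        \<longleftrightarrow> x = hatpi L j ` closure (cellI L j k)" for x
  proof
    assume "x \<in> {hatpi L j ` closure (cellI L j k') | k'. hatpi L j ` cellI L j k' = hatpi L j ` cellI L j k}"
    then obtain k' where k': "x = hatpi L j ` closure (cellI L j k')" "hatpi L j ` cellI L j k' = hatpi L j ` cellI L j k" by blast
    have "k' \<in> Gset L j k" using k'(2) by (simp add: Gset_def)
    thus "x = hatpi L j ` closure (cellI L j k)" using Gset_closure[OF L] k'(1) by blast
  next
    assume "x = hatpi L j ` closure (cellI L j k)"
    thus "x \<in> {hatpi L j ` closure (cellI L j k') | k'. hatpi L j ` cellI L j k' = hatpi L j ` cellI L j k}" by blast
  qed
  hence "{hatpi L j ` closure (cellI L j k') | k'. hatpi L j ` cellI L j k' = hatpi L j ` cellI L j k}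
        = {hatpi L j ` closure (cellI L j k)}" by (intro set_eqI) (simp only: singleton_iff)
  thus ?thesis unfolding Xclosed_iff[OF L] by simp
qed

lemma cell_sub_Xclosed:
  assumes L: "L > 0"
  shows "hatpi L j ` cellI L j k \<subseteq> Xclosed L j (hatpi L j ` cellI L j k)"
  unfolding XC[OF L] using closure_subset by (rule image_mono)

lemma card_UN_bound:
  assumes "finite A" "\<And>a. a \<in> A \<Longrightarrow> finite (B a) \<and> card (B a) \<le> m"
  shows "finite (\<Union>a\<in>A. B a) \<and> card (\<Union>a\<in>A. B a) \<le> card A * m"
proof -
  have "card (\<Union>a\<in>A. B a) \<le> (\<Sum>a\<in>A. card (B a))" by (rule card_UN_le[OF assms(1)])
  also have "\<dots> \<le> card A * m" using assms(2) sum_bounded_above[of A "\<lambda>a. card (B a)" m] by simp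
  finally show ?thesis using assms by auto
qed

lemma card_img_bound:
  "finite A \<Longrightarrow> card A \<le> m \<Longrightarrow> finite (f ` A) \<and> card (f ` A) \<le> m"
  using card_image_le le_trans by blast

lemma claim3:
  assumes L: "L > 0"
  shows "\<forall>P \<in> X L j. finite {x. hatpi L j x = P} \<and> card {x. hatpi L j x = P} \<le> 3"
proof
  fix P assume "P \<in> X L j"
  then obtain p where P: "P = hatpi L j p" by (auto simp: X_def)
  have "{x. hatpi L j x = P} = {q. (p,q) \<in> Rj L j}" unfolding P using class_eq_hatpi by blast
  thus "finite {x. hatpi L j x = P} \<and> card {x. hatpi L j x = P} \<le> 3" using class_card[OF L] by simp
qed

lemma claim4:
  assumes L: "L > 0" and c: "XcellAny L j c"
  shows "finite (link L j c) \<and> card (link L j c) \<le> 24"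
proof -
  obtain k where ck: "c = hatpi L j ` cellI L j k" using c XcellAny_iff[OF L] by blast
  obtain p where pk: "p \<in> cellI L j k" using cellI_nonempty[OF L] by blast
  define C where "C = {q. (p,q) \<in> Rj L j}"
  have Cf: "finite C" "card C \<le> 3" using class_card[OF L] by (auto simp: C_def)
  define S where "S = (\<Union>q\<in>C. star2 (cid L j q) - (if dimK k = 0 then {cid L j q} else {}))"
  have dimq: "dimK (cid L j q) = dimK k" if "q \<in> C" for q
    using cell_glue[OF L _ pk cid_in[OF L]] that by (auto simp: C_def)
  have Sb: "finite S \<and> card S \<le> card C * 8"
    unfolding S_def
  proof (rule card_UN_bound[OF Cf(1)])
    fix q assume q: "q \<in> C"
    show "finite (star2 (cid L j q) - (if dimK k = 0 then {cid L j q} else {})) \<and>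
          card (star2 (cid L j q) - (if dimK k = 0 then {cid L j q} else {})) \<le> 8"
    proof (cases "dimK k = 0")
      case True thus ?thesis using card_star2_minus[of "cid L j q"] dimq[OF q] finite_star2 by simp
    next
      case False thus ?thesis using card_star2[of "cid L j q"] dimq[OF q] finite_star2 by simp
    qed
  qed
  have sub: "link L j c \<subseteq> (\<lambda>k'. hatpi L j ` cellI L j k') ` S"
  proof
    fix c' assume "c' \<in> link L j c"
    hence c': "XcellAny L j c'" "c' \<noteq> c" "Xclosed L j c \<subseteq> Xclosed L j c'" by (auto simp: link_def)
    obtain k' where ck': "c' = hatpi L j ` cellI L j k'" using c'(1) XcellAny_iff[OF L] by blast
    have "hatpi L j p \<in> Xclosed L j c" unfolding ck XC[OF L] using pk closure_subset by blast
    hence "hatpi L j p \<in> hatpi L j ` closure (cellI L j k')" using c'(3) unfolding ck' XC[OF L] by blast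
    then obtain q where q: "q \<in> closure (cellI L j k')" "hatpi L j q = hatpi L j p" by auto
    have qC: "q \<in> C" using q hatpi_eq_iff Rj_sym by (auto simp: C_def)
    have ks: "k' \<in> star2 (cid L j q)" using q(1) closure_cellI_iff[OF L] faces_star2 by blast
    have "k' \<noteq> cid L j q" if "dimK k = 0"
    proof
      assume kq: "k' = cid L j q"
      have "(p,q) \<in> Rj L j" using qC by (simp add: C_def)
      hence "hatpi L j ` cellI L j (cid L j q) = hatpi L j ` cellI L j k"
        using cell_glue[OF L _ pk cid_in[OF L]] by blast
      thus False using c'(2) ck ck' kq by simp
    qed
    hence "k' \<in> S" unfolding S_def using qC ks by auto
    thus "c' \<in> (\<lambda>k'. hatpi L j ` cellI L j k') ` S" using ck' by blast
  qed
  have "card S \<le> 24" using Sb Cf by linarith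
  hence "finite ((\<lambda>k'. hatpi L j ` cellI L j k') ` S) \<and> card ((\<lambda>k'. hatpi L j ` cellI L j k') ` S) \<le> 24"
    using Sb card_img_bound by blast
  thus ?thesis using sub by (meson card_mono finite_subset le_trans)
qed

lemma claim6:
  assumes L: "L > 0" and c: "XcellAny L j c"
  shows "finite {c'. XcellAny L j c' \<and> c' \<subseteq> Xclosed L j c} \<and> card {c'. XcellAny L j c' \<and> c' \<subseteq> Xclosed L j c} \<le> 9"
proof -
  obtain k where ck: "c = hatpi L j ` cellI L j k" using c XcellAny_iff[OF L] by blast
  have sub: "{c'. XcellAny L j c' \<and> c' \<subseteq> Xclosed L j c} \<subseteq> (\<lambda>f. hatpi L j ` cellI L j f) ` faces2 k"
  proof
    fix c' assume "c' \<in> {c'. XcellAny L j c' \<and> c' \<subseteq> Xclosed L j c}"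
    hence c': "XcellAny L j c'" "c' \<subseteq> hatpi L j ` closure (cellI L j k)" unfolding ck XC[OF L] by auto
    obtain k' where ck': "c' = hatpi L j ` cellI L j k'" using c'(1) XcellAny_iff[OF L] by blast
    obtain p' where p': "p' \<in> cellI L j k'" using cellI_nonempty[OF L] by blast
    have "hatpi L j p' \<in> hatpi L j ` closure (cellI L j k)" using c'(2) ck' p' by blast
    then obtain q where q: "q \<in> closure (cellI L j k)" "hatpi L j p' = hatpi L j q" by auto
    have "(p',q) \<in> Rj L j" using q hatpi_eq_iff by blast
    hence "hatpi L j ` cellI L j (cid L j q) = c'" using cell_glue[OF L _ p' cid_in[OF L]] ck' by blast
    moreover have "cid L j q \<in> faces2 k" using q(1) closure_cellI_iff[OF L] by blast
    ultimately show "c' \<in> (\<lambda>f. hatpi L j ` cellI L j f) ` faces2 k" by blast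
  qed
  have "card (faces2 k) \<le> 9" using card_faces2[of k] by (simp split: if_splits)
  hence "finite ((\<lambda>f. hatpi L j ` cellI L j f) ` faces2 k) \<and> card ((\<lambda>f. hatpi L j ` cellI L j f) ` faces2 k) \<le> 9"
    using card_img_bound finite_faces2 by blast
  thus ?thesis using sub by (meson card_mono finite_subset le_trans)
qed

definition up2 :: "kidx \<Rightarrow> kidx" where "up2 k = ((fst (fst k), True), (fst (snd k), True))"

lemma cellI_sub_up2: assumes L: "L > 0" shows "cellI L j k \<subseteq> closure (cellI L j (up2 k))"
proof
  fix z assume "z \<in> cellI L j k"
  hence "cid L j z = k" by (simp add: cellI_iff[OF L])
  moreover have "k \<in> faces2 (up2 k)" by (cases k) (auto simp: up2_def faces2_def faces1_def)
  ultimately show "z \<in> closure (cellI L j (up2 k))" using closure_cellI_iff[OF L] by simp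
qed

lemma claim8:
  assumes L: "L > 0" and c: "Xcell L j 2 c"
  shows "\<exists>F. finite F \<and> card F \<le> 27 \<and> (\<forall>e\<in>F. \<exists>e0. Ycell L j 2 e0 \<and> e = closure e0) \<and>
             {x. hatpi L j x \<in> Xclosed L j c} \<subseteq> \<Union>F"
proof -
  obtain k where ck: "c = hatpi L j ` cellI L j k" using c Xcell_iff[OF L] by blast
  define T where "T = (\<Union>f\<in>faces2 k. Gset L j f)"
  have Tb: "finite T \<and> card T \<le> card (faces2 k) * 3"
    unfolding T_def by (rule card_UN_bound[OF finite_faces2]) (use Gset_card[OF L] in auto)
  have "card (faces2 k) \<le> 9" using card_faces2[of k] by (simp split: if_splits)
  hence Tc: "card T \<le> 27" using Tb by linarith
  define F where "F = (\<lambda>f'. closure (cellI L j (up2 f'))) ` T"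
  have Fb: "finite F \<and> card F \<le> 27" unfolding F_def using Tb Tc card_img_bound by blast
  have Fy: "\<forall>e\<in>F. \<exists>e0. Ycell L j 2 e0 \<and> e = closure e0"
  proof
    fix e assume "e \<in> F"
    then obtain f' where "e = closure (cellI L j (up2 f'))" unfolding F_def by blast
    moreover have "Ycell L j 2 (cellI L j (up2 f'))" unfolding Ycell_iff[OF L] by (auto simp: up2_def dimK_def)
    ultimately show "\<exists>e0. Ycell L j 2 e0 \<and> e = closure e0" by blast
  qed
  have cov: "{x. hatpi L j x \<in> Xclosed L j c} \<subseteq> \<Union>F"
  proof
    fix x assume "x \<in> {x. hatpi L j x \<in> Xclosed L j c}"
    hence "hatpi L j x \<in> hatpi L j ` closure (cellI L j k)" unfolding ck XC[OF L] by simp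
    then obtain q where q: "q \<in> closure (cellI L j k)" "hatpi L j x = hatpi L j q" by auto
    have fq: "cid L j q \<in> faces2 k" using q(1) closure_cellI_iff[OF L] by blast
    have "(q,x) \<in> Rj L j" using q hatpi_eq_iff Rj_sym by blast
    hence "hatpi L j ` cellI L j (cid L j x) = hatpi L j ` cellI L j (cid L j q)"
      using cell_glue[OF L _ cid_in[OF L] cid_in[OF L]] by blast
    hence "cid L j x \<in> T" unfolding T_def Gset_def using fq by blast
    moreover have "x \<in> closure (cellI L j (up2 (cid L j x)))" using cellI_sub_up2[OF L] cid_in[OF L] by blast
    ultimately show "x \<in> \<Union>F" unfolding F_def by blast
  qed
  show ?thesis using Fb Fy cov by blast
qed

definition Nb :: "nat \<Rightarrow> int \<Rightarrow> (real \<times> real) set set \<Rightarrow> (real \<times> real) set set set" where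
  "Nb L j t = {c'. XcellAny L j c' \<and> Xclosed L j c' \<inter> Xclosed L j t \<noteq> {}}"

lemma Nb_card:
  assumes L: "L > 0" and t: "XcellAny L j t"
  shows "finite (Nb L j t) \<and> card (Nb L j t) \<le> 243"
proof -
  obtain k where tk: "t = hatpi L j ` cellI L j k" using t XcellAny_iff[OF L] by blast
  define S where "S = (\<Union>f\<in>faces2 k. \<Union>g\<in>Gset L j f. star2 g)"
  have inner: "finite (\<Union>g\<in>Gset L j f. star2 g) \<and> card (\<Union>g\<in>Gset L j f. star2 g) \<le> 27" for f
  proof -
    have "finite (\<Union>g\<in>Gset L j f. star2 g) \<and> card (\<Union>g\<in>Gset L j f. star2 g) \<le> card (Gset L j f) * 9"
      using Gset_card[OF L] finite_star2 card_star2_9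
      by (intro card_UN_bound) auto
    moreover have "card (Gset L j f) * 9 \<le> 3 * 9" using Gset_card[OF L, of j f] by simp
    ultimately show ?thesis by simp
  qed
  have Sb: "finite S \<and> card S \<le> card (faces2 k) * 27"
    unfolding S_def by (rule card_UN_bound[OF finite_faces2]) (use inner in auto)
  have "card (faces2 k) \<le> 9" using card_faces2[of k] by (simp split: if_splits)
  hence Sc: "card S \<le> 243" using Sb by linarith
  have sub: "Nb L j t \<subseteq> (\<lambda>k'. hatpi L j ` cellI L j k') ` S"
  proof
    fix c' assume "c' \<in> Nb L j t"
    hence c': "XcellAny L j c'" "Xclosed L j c' \<inter> Xclosed L j t \<noteq> {}" by (auto simp: Nb_def)
    obtain k' where ck': "c' = hatpi L j ` cellI L j k'" using c'(1) XcellAny_iff[OF L] by blast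
    obtain z where z: "z \<in> hatpi L j ` closure (cellI L j k')" "z \<in> hatpi L j ` closure (cellI L j k)"
      using c'(2) unfolding ck' tk XC[OF L] by blast
    obtain q where q: "q \<in> closure (cellI L j k)" "z = hatpi L j q" using z(2) by blast
    obtain q' where q': "q' \<in> closure (cellI L j k')" "z = hatpi L j q'" using z(1) by blast
    have f: "cid L j q \<in> faces2 k" using q(1) closure_cellI_iff[OF L] by blast
    have "(q,q') \<in> Rj L j" using q q' hatpi_eq_iff by metis
    hence "hatpi L j ` cellI L j (cid L j q') = hatpi L j ` cellI L j (cid L j q)"
      using cell_glue[OF L _ cid_in[OF L] cid_in[OF L]] by blast
    hence g: "cid L j q' \<in> Gset L j (cid L j q)" by (simp add: Gset_def)
    have "k' \<in> star2 (cid L j q')" using q'(1) closure_cellI_iff[OF L] faces_star2 by blast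
    hence "k' \<in> S" unfolding S_def using f g by blast
    thus "c' \<in> (\<lambda>k'. hatpi L j ` cellI L j k') ` S" using ck' by blast
  qed
  have "finite ((\<lambda>k'. hatpi L j ` cellI L j k') ` S) \<and> card ((\<lambda>k'. hatpi L j ` cellI L j k') ` S) \<le> 243"
    using Sb Sc card_img_bound by blast
  thus ?thesis using sub by (meson card_mono finite_subset le_trans)
qed


definition chainsN :: "nat \<Rightarrow> int \<Rightarrow> nat \<Rightarrow> (real \<times> real) set set \<Rightarrow> (real \<times> real) set set list set" where
  "chainsN L j N c = {cs. cs \<noteq> [] \<and> length cs \<le> N \<and> hd cs = c \<and> (\<forall>t\<in>set cs. XcellAny L j t) \<and>
      (\<forall>i. Suc i < length cs \<longrightarrow> Xclosed L j (cs ! i) \<inter> Xclosed L j (cs ! Suc i) \<noteq> {})}"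

lemma cball_comb_eq: "cball_comb L j N c = \<Union>((\<lambda>cs. Xclosed L j (last cs)) ` chainsN L j N c)"
  unfolding cball_comb_def chainsN_def by blast

definition Reach :: "nat \<Rightarrow> int \<Rightarrow> nat \<Rightarrow> (real \<times> real) set set \<Rightarrow> (real \<times> real) set set set" where
  "Reach L j n c = last ` chainsN L j n c"

lemma Reach_cell: "t \<in> Reach L j n c \<Longrightarrow> XcellAny L j t"
  unfolding Reach_def chainsN_def by auto

lemma Reach_0: "Reach L j 0 c = {}"
  unfolding Reach_def chainsN_def by auto

lemma Reach_step: "Reach L j (Suc n) c \<subseteq> {c} \<union> \<Union>(Nb L j ` Reach L j n c)"
proof
  fix x assume "x \<in> Reach L j (Suc n) c"
  then obtain cs where cs: "cs \<in> chainsN L j (Suc n) c" and x: "x = last cs" unfolding Reach_def by blast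
  have ne: "cs \<noteq> []" and len: "length cs \<le> Suc n" and hd: "hd cs = c"
    and cells: "\<forall>t\<in>set cs. XcellAny L j t"
    and adj: "\<And>i. Suc i < length cs \<Longrightarrow> Xclosed L j (cs ! i) \<inter> Xclosed L j (cs ! Suc i) \<noteq> {}"
    using cs unfolding chainsN_def by auto
  show "x \<in> {c} \<union> \<Union>(Nb L j ` Reach L j n c)"
  proof (cases "length cs = 1")
    case True
    then obtain y where "cs = [y]" by (metis One_nat_def length_0_conv length_Suc_conv)
    thus ?thesis using x hd by simp
  next
    case False
    have "length cs \<noteq> 0" using ne by simp
    hence l2: "length cs \<ge> 2" using False by linarith
    define cs' where "cs' = butlast cs"
    have lcs': "length cs' = length cs - 1" by (simp add: cs'_def)
    have nth': "cs' ! i = cs ! i" if "i < length cs'" for i using that by (simp add: cs'_def nth_butlast)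
    have ne': "cs' \<noteq> []" using l2 lcs' by auto
    have hd': "hd cs' = c" using nth'[of 0] ne' hd ne by (simp add: hd_conv_nth)
    have cells': "\<forall>t\<in>set cs'. XcellAny L j t" using cells by (auto simp: cs'_def dest: in_set_butlastD)
    have adj': "\<forall>i. Suc i < length cs' \<longrightarrow> Xclosed L j (cs' ! i) \<inter> Xclosed L j (cs' ! Suc i) \<noteq> {}"
      using adj nth' lcs' by auto
    have "cs' \<in> chainsN L j n c" unfolding chainsN_def using ne' hd' cells' adj' lcs' len by auto
    hence r: "last cs' \<in> Reach L j n c" unfolding Reach_def by blast
    have ii: "length cs' - 1 = length cs - 2" using lcs' by simp
    have "last cs' = cs' ! (length cs' - 1)" using ne' by (simp add: last_conv_nth)
    also have "\<dots> = cs ! (length cs' - 1)" using nth'[of "length cs' - 1"] ne' by simp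
    finally have lc': "last cs' = cs ! (length cs - 2)" using ii by simp
    have lc: "last cs = cs ! Suc (length cs - 2)" using ne l2 by (simp add: last_conv_nth Suc_diff_Suc numeral_2_eq_2)
    have "Xclosed L j (cs ! (length cs - 2)) \<inter> Xclosed L j (cs ! Suc (length cs - 2)) \<noteq> {}"
      using adj l2 by simp
    hence "Xclosed L j (last cs) \<inter> Xclosed L j (last cs') \<noteq> {}" using lc lc' by auto
    moreover have "XcellAny L j (last cs)" using cells ne by simp
    ultimately have "last cs \<in> Nb L j (last cs')" by (simp add: Nb_def)
    thus ?thesis using x r by blast
  qed
qed

lemma Reach_card:
  assumes L: "L > 0"
  shows "finite (Reach L j n c) \<and> card (Reach L j n c) \<le> 244 ^ n"
proof (induction n)
  case 0 thus ?case by (simp add: Reach_0)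
next
  case (Suc n)
  have U: "finite (\<Union>(Nb L j ` Reach L j n c)) \<and> card (\<Union>(Nb L j ` Reach L j n c)) \<le> card (Reach L j n c) * 243"
    using Suc.IH Nb_card[OF L] Reach_cell by (intro card_UN_bound) auto
  have f: "finite ({c} \<union> \<Union>(Nb L j ` Reach L j n c))" using U by simp
  have "card ({c} \<union> \<Union>(Nb L j ` Reach L j n c)) \<le> card {c} + card (\<Union>(Nb L j ` Reach L j n c))"
    by (rule card_Un_le)
  also have "\<dots> \<le> 1 + 244 ^ n * 243" using U Suc.IH by simp
  also have "\<dots> \<le> 244 ^ Suc n"
  proof -
    have "(1::nat) \<le> 244 ^ n" by simp
    thus ?thesis by simp
  qed
  finally have "card ({c} \<union> \<Union>(Nb L j ` Reach L j n c)) \<le> 244 ^ Suc n" .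
  thus ?case using Reach_step f by (meson card_mono finite_subset le_trans)
qed

lemma cell_nonempty_X: assumes L: "L > 0" and c: "XcellAny L j c" shows "c \<noteq> {}"
proof -
  obtain k where "c = hatpi L j ` cellI L j k" using c XcellAny_iff[OF L] by blast
  thus ?thesis using cellI_nonempty[OF L] by simp
qed

lemma claim7:
  assumes L: "L > 0"
  shows "\<exists>C :: nat. \<forall>(j :: int) c. XcellAny L j c \<longrightarrow>
        finite {c'. XcellAny L j c' \<and> c' \<subseteq> cball_comb L j N c}
      \<and> card {c'. XcellAny L j c' \<and> c' \<subseteq> cball_comb L j N c} \<le> C"
proof (intro exI allI impI)
  fix j c assume c: "XcellAny L j c"
  have sub: "{c'. XcellAny L j c' \<and> c' \<subseteq> cball_comb L j N c} \<subseteq> \<Union>(Nb L j ` Reach L j N c)"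
  proof
    fix c' assume "c' \<in> {c'. XcellAny L j c' \<and> c' \<subseteq> cball_comb L j N c}"
    hence c': "XcellAny L j c'" "c' \<subseteq> cball_comb L j N c" by auto
    obtain z where z: "z \<in> c'" using cell_nonempty_X[OF L c'(1)] by blast
    then obtain cs where cs: "cs \<in> chainsN L j N c" "z \<in> Xclosed L j (last cs)"
      using c'(2) unfolding cball_comb_eq by blast
    obtain k where "c' = hatpi L j ` cellI L j k" using c'(1) XcellAny_iff[OF L] by blast
    hence "z \<in> Xclosed L j c'" using cell_sub_Xclosed[OF L] z by blast
    hence "c' \<in> Nb L j (last cs)" using cs c'(1) by (auto simp: Nb_def)
    thus "c' \<in> \<Union>(Nb L j ` Reach L j N c)" using cs(1) unfolding Reach_def by blast
  qed
  have U: "finite (\<Union>(Nb L j ` Reach L j N c)) \<and> card (\<Union>(Nb L j ` Reach L j N c)) \<le> card (Reach L j N c) * 243"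
    using Reach_card[OF L] Nb_card[OF L] Reach_cell by (intro card_UN_bound) auto
  have "card (Reach L j N c) * 243 \<le> 244 ^ N * 243" using Reach_card[OF L] by simp
  thus "finite {c'. XcellAny L j c' \<and> c' \<subseteq> cball_comb L j N c}
      \<and> card {c'. XcellAny L j c' \<and> c' \<subseteq> cball_comb L j N c} \<le> 244 ^ N * 243"
    using U sub by (meson card_mono finite_subset le_trans)
qed

lemma lvl_x:
  assumes L: "L > 0" and fx: "fst p = of_int a * ux j" and pq: "(p,q) \<in> Rj L (j+1)"
  shows "(p,q) \<in> Rj L j"
proof -
  have "p = q \<or> (\<exists>i<j+1. \<exists>n l a. prx L i n l a p q)" using pq Rj_iff[OF L] by blast
  thus ?thesis
  proof
    assume "p = q" thus ?thesis by (simp add: Rj_refl)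
  next
    assume "\<exists>i<j+1. \<exists>n l a. prx L i n l a p q"
    then obtain i n l a' where i: "i < j+1" and h: "prx L i n l a' p q" by blast
    show ?thesis
    proof (cases "i < j")
      case True thus ?thesis using h Rj_iff[OF L] by blast
    next
      case False
      hence ij: "i = j" using i by simp
      have a': "a' \<in> {1,2,3}" and f: "fst p = of_int (4*n+a') * 4 powi (-(j+1))"
        using h ij by (auto simp: prx_def onblk_def)
      have "(4::real) powi (-j) = 4 ^ nat (j+1 - j) * 4 powi (-(j+1))" by (rule powi_shift) auto
      hence "ux j = 4 * 4 powi (-(j+1))" by (simp add: ux_def)
      hence "of_int (4*a) * (4::real) powi (-(j+1)) = of_int (4*n+a') * 4 powi (-(j+1))"
        using fx f by simp
      hence "4*a = 4*n+a'" by simp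
      hence "a' mod 4 = 0" by presburger
      thus ?thesis using a' by auto
    qed
  qed
qed

lemma lvl_y:
  assumes L: "L > 0" and fy: "snd p = of_int b * wy L j" and gy: "snd q = of_int b' * wy L j" and pq: "(p,q) \<in> Rj L (j+1)"
  shows "(p,q) \<in> Rj L j"
proof -
  have "p = q \<or> (\<exists>i<j+1. \<exists>n l a. prx L i n l a p q)" using pq Rj_iff[OF L] by blast
  thus ?thesis
  proof
    assume "p = q" thus ?thesis by (simp add: Rj_refl)
  next
    assume "\<exists>i<j+1. \<exists>n l a. prx L i n l a p q"
    then obtain i n l a' where i: "i < j+1" and h: "prx L i n l a' p q" by blast
    show ?thesis
    proof (cases "i < j")
      case True thus ?thesis using h Rj_iff[OF L] by blast
    next
      case False
      hence ij: "i = j" using i by simp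
      define H where "H = Hh L j"
      have H: "H > 0" using Hh_pos[OF L] by (simp add: H_def)
      have mv: "mv L > 0" using mv_pos[OF L] .
      obtain t where t: "snd q = snd p + of_int t * H" using h ij by (auto simp: prx_def H_def)
      have bp: "of_int (3*l+a'-1) * H \<le> snd p" "snd p \<le> of_int (3*l+a'+1) * H"
        and bq: "of_int (3*l+a'-1) * H \<le> snd q" "snd q \<le> of_int (3*l+a'+1) * H"
        using h ij by (auto simp: prx_def onblk_def H_def)
      have "of_int t * H \<le> of_int (3*l+a'+1) * H - of_int (3*l+a'-1) * H" using bp bq t by simp
      also have "\<dots> = of_int 2 * H" by (simp add: algebra_simps)
      finally have t2: "t \<le> 2" using H by (simp add: mult_le_cancel_right_pos)
      have "of_int (-2) * H \<le> of_int t * H"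
      proof -
        have "of_int (-2) * H = of_int (3*l+a'-1) * H - of_int (3*l+a'+1) * H" by (simp add: algebra_simps)
        also have "\<dots> \<le> of_int t * H" using bp bq t by simp
        finally show ?thesis .
      qed
      hence "real_of_int (-2) \<le> of_int t" using H mult_le_cancel_right_pos by blast
      hence tm2: "-2 \<le> t" by (simp only: of_int_le_iff)
      have "wy L j = mv L ^ nat (j+1 - j) * H" unfolding wy_def H_def Hh_def by (rule powi_shift) (use mv in auto)
      hence wH: "wy L j = mv L * H" by simp
      have "of_int b' * (mv L * H) = of_int b * (mv L * H) + of_int t * H" using t fy gy wH by simp
      hence "(of_int ((b' - b) * (3 * int L)) - of_int t) * H = 0" by (simp add: mv_def algebra_simps)
      hence "real_of_int ((b' - b) * (3 * int L)) = real_of_int t" using H by simp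
      hence eq: "(b' - b) * (3 * int L) = t" by (simp only: of_int_eq_iff)
      have "t = 0"
      proof (rule ccontr)
        assume "t \<noteq> 0"
        have "(3 * int L) dvd \<bar>t\<bar>" using eq by (metis dvd_abs_iff dvd_triv_right)
        hence "3 * int L \<le> \<bar>t\<bar>" using \<open>t \<noteq> 0\<close> by (simp add: zdvd_imp_le)
        thus False using t2 tm2 L by linarith
      qed
      hence "b' = b" using eq L by simp
      moreover have "fst q = fst p" using h by (simp add: prx_def onblk_def)
      ultimately have "q = p" using fy gy by (simp add: prod_eq_iff)
      thus ?thesis by (simp add: Rj_refl)
    qed
  qed
qed

lemma pij_hatpi: assumes L: "L > 0" shows "pij L j (hatpi L j p) = hatpi L (j+1) p"
proof
  show "pij L j (hatpi L j p) \<subseteq> hatpi L (j+1) p"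
  proof
    fix x assume "x \<in> pij L j (hatpi L j p)"
    then obtain y where "(p,y) \<in> Rj L j" "(y,x) \<in> Rj L (j+1)" by (auto simp: pij_def hatpi_def)
    moreover have "(p,y) \<in> Rj L (j+1)" using calculation(1) Rj_mono[OF L, of j "j+1" p y] by simp
    ultimately have "(p,x) \<in> Rj L (j+1)" using Rj_trans by blast
    thus "x \<in> hatpi L (j+1) p" by (simp add: hatpi_def)
  qed
next
  show "hatpi L (j+1) p \<subseteq> pij L j (hatpi L j p)"
    using Rj_refl by (auto simp: pij_def hatpi_def)
qed

lemma skel_pt:
  assumes L: "L > 0" and P: "P \<in> skel1 L j"
  shows "\<exists>p. P = hatpi L j p \<and> ((\<exists>a. fst p = of_int a * ux j) \<or> (\<exists>b. snd p = of_int b * wy L j))"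
proof -
  obtain c where c: "Xcell L j 0 c \<or> Xcell L j 1 c" "P \<in> c" using P by (auto simp: skel1_def)
  then obtain k where k: "dimK k \<le> 1" "c = hatpi L j ` cellI L j k" using Xcell_iff[OF L] by (metis le_refl zero_le_one)
  then obtain p where p: "p \<in> cellI L j k" "P = hatpi L j p" using c(2) by blast
  have "\<not> snd (fst k) \<or> \<not> snd (snd k)" using k(1) by (auto simp: dimK_def)
  hence "(\<exists>a. fst p = of_int a * ux j) \<or> (\<exists>b. snd p = of_int b * wy L j)"
    using p(1) by (cases k) (auto simp: cellI_def C1_def mem_Times_iff)
  thus ?thesis using p(2) by blast
qed

lemma claim1:
  assumes L: "L > 0"
  shows "inj_on (pij L j) (skel1 L j)"
proof (rule inj_onI)
  fix P Q assume P: "P \<in> skel1 L j" and Q: "Q \<in> skel1 L j" and e: "pij L j P = pij L j Q"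
  obtain p where p: "P = hatpi L j p" "(\<exists>a. fst p = of_int a * ux j) \<or> (\<exists>b. snd p = of_int b * wy L j)"
    using skel_pt[OF L P] by blast
  obtain q where q: "Q = hatpi L j q" "(\<exists>a. fst q = of_int a * ux j) \<or> (\<exists>b. snd q = of_int b * wy L j)"
    using skel_pt[OF L Q] by blast
  have "hatpi L (j+1) p = hatpi L (j+1) q" using e p q pij_hatpi[OF L] by simp
  hence pq: "(p,q) \<in> Rj L (j+1)" using hatpi_eq_iff by blast
  have "(p,q) \<in> Rj L j"
  proof (cases "\<exists>a. fst p = of_int a * ux j")
    case True thus ?thesis using lvl_x[OF L _ pq] by blast
  next
    case False
    note fp = False
    show ?thesis
    proof (cases "\<exists>a. fst q = of_int a * ux j")
      case True thus ?thesis using lvl_x[OF L _ Rj_sym[OF pq]] Rj_sym by blast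
    next
      case False thus ?thesis using fp p q lvl_y[OF L _ _ pq] by blast
    qed
  qed
  thus "P = Q" using p q hatpi_eq_iff by blast
qed

lemma claim2:
  assumes L: "L > 0"
  shows "\<forall>p \<in> X L j. Xcell L j 0 {p} \<longrightarrow> {q \<in> X L j. pij L j q = pij L j p} = {p}"
proof (intro ballI impI)
  fix P assume PX: "P \<in> X L j" and c: "Xcell L j 0 {P}"
  obtain k where k: "dimK k = 0" "{P} = hatpi L j ` cellI L j k" using c Xcell_iff[OF L] by blast
  obtain v where v: "v \<in> cellI L j k" using cellI_nonempty[OF L] by blast
  have Pv: "P = hatpi L j v" using k(2) v by blast
  have "\<not> snd (fst k)" using k(1) by (auto simp: dimK_def)
  hence fv: "fst v = of_int (fst (fst k)) * ux j" using v by (cases k) (auto simp: cellI_def C1_def mem_Times_iff)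
  show "{q \<in> X L j. pij L j q = pij L j P} = {P}"
  proof
    show "{q \<in> X L j. pij L j q = pij L j P} \<subseteq> {P}"
    proof
      fix Q assume "Q \<in> {q \<in> X L j. pij L j q = pij L j P}"
      then obtain r where r: "Q = hatpi L j r" "pij L j Q = pij L j P" by (auto simp: X_def)
      have "hatpi L (j+1) r = hatpi L (j+1) v" using r Pv pij_hatpi[OF L] by simp
      hence "(v,r) \<in> Rj L (j+1)" using hatpi_eq_iff Rj_sym by blast
      hence "(v,r) \<in> Rj L j" using lvl_x[OF L fv] by blast
      hence "Q = P" using r Pv hatpi_eq_iff Rj_sym by blast
      thus "Q \<in> {P}" by simp
    qed
  next
    show "{P} \<subseteq> {q \<in> X L j. pij L j q = pij L j P}" using PX by simp
  qed
qed


definition Adj :: "nat \<Rightarrow> int \<Rightarrow> (real \<times> real) set \<Rightarrow> (real \<times> real) set set \<Rightarrow> (real \<times> real) set set \<Rightarrow> bool" where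
  "Adj L j v t t' \<longleftrightarrow> XcellAny L j t \<and> XcellAny L j t' \<and> v \<in> Xclosed L j t \<and> v \<in> Xclosed L j t' \<and>
     (\<exists>r. Xcell L j 1 r \<and> Xclosed L j r \<subseteq> Xclosed L j t \<and> Xclosed L j r \<subseteq> Xclosed L j t')"

lemma Adj_sym: "Adj L j v t t' \<Longrightarrow> Adj L j v t' t" unfolding Adj_def by blast

lemma symp_Adj: "symp (Adj L j v)" by (rule sympI) (rule Adj_sym)

lemma AdjR_sym: "(Adj L j v)\<^sup>*\<^sup>* t t' \<Longrightarrow> (Adj L j v)\<^sup>*\<^sup>* t' t"
  using sympD[OF symp_rtranclp[OF symp_Adj]] by blast

lemma chain_of_AdjR:
  assumes "(Adj L j v)\<^sup>*\<^sup>* t t'" and "XcellAny L j t" and "v \<in> Xclosed L j t"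
  shows "\<exists>ts. ts \<noteq> [] \<and> hd ts = t \<and> last ts = t' \<and>
           (\<forall>\<tau>\<in>set ts. XcellAny L j \<tau> \<and> v \<in> Xclosed L j \<tau>) \<and>
           (\<forall>i. Suc i < length ts \<longrightarrow>
              (\<exists>r. Xcell L j 1 r \<and> Xclosed L j r \<subseteq> Xclosed L j (ts ! i)
                   \<and> Xclosed L j r \<subseteq> Xclosed L j (ts ! Suc i)))"
  using assms(1)
proof (induction rule: rtranclp_induct)
  case base
  show ?case by (rule exI[of _ "[t]"]) (use assms in auto)
next
  case (step y z)
  then obtain ts where ts: "ts \<noteq> []" "hd ts = t" "last ts = y"
    "\<forall>\<tau>\<in>set ts. XcellAny L j \<tau> \<and> v \<in> Xclosed L j \<tau>"
    "\<forall>i. Suc i < length ts \<longrightarrow> (\<exists>r. Xcell L j 1 r \<and> Xclosed L j r \<subseteq> Xclosed L j (ts ! i) \<and> Xclosed L j r \<subseteq> Xclosed L j (ts ! Suc i))"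
    by blast
  have yz: "Adj L j v y z" by fact
  show ?case
  proof (rule exI[of _ "ts @ [z]"], intro conjI allI impI)
    show "ts @ [z] \<noteq> []" by simp
    show "hd (ts @ [z]) = t" using ts by simp
    show "last (ts @ [z]) = z" by simp
    show "\<forall>\<tau>\<in>set (ts @ [z]). XcellAny L j \<tau> \<and> v \<in> Xclosed L j \<tau>" using ts yz by (auto simp: Adj_def)
  next
    fix i assume i: "Suc i < length (ts @ [z])"
    show "\<exists>r. Xcell L j 1 r \<and> Xclosed L j r \<subseteq> Xclosed L j ((ts @ [z]) ! i) \<and> Xclosed L j r \<subseteq> Xclosed L j ((ts @ [z]) ! Suc i)"
    proof (cases "Suc i < length ts")
      case True thus ?thesis using ts(5) by (simp add: nth_append)
    next
      case False
      hence "Suc i = length ts" using i by simp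
      hence si: "Suc i = length ts" .
      have "(ts @ [z]) ! i = ts ! i" using si by (simp add: nth_append)
      also have "ts ! i = y"
      proof -
        have ii: "i = length ts - 1" using si by simp
        show ?thesis using ts(1,3) by (simp add: last_conv_nth ii)
      qed
      finally have "(ts @ [z]) ! i = y" .
      moreover have "(ts @ [z]) ! Suc i = z" using si by (simp add: nth_append)
      ultimately have "(ts @ [z]) ! i = y" "(ts @ [z]) ! Suc i = z" by blast+
      thus ?thesis using yz by (simp add: Adj_def)
    qed
  qed
qed

abbreviation XCk where "XCk L j k \<equiv> hatpi L j ` cellI L j k"

lemma v_in_Xclosed:
  assumes L: "L > 0" and "hatpi L j q = v" and "cid L j q \<in> faces2 k"
  shows "v \<in> Xclosed L j (XCk L j k)"
  unfolding XC[OF L] using assms closure_cellI_iff[OF L] by blast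

lemma Adj_face:
  assumes L: "L > 0" and q: "hatpi L j q = v" and f1: "cid L j q \<in> faces2 kr" and f2: "cid L j q \<in> faces2 kt"
    and d: "dimK kr = 1" and rt: "kr \<in> faces2 kt"
  shows "Adj L j v (XCk L j kr) (XCk L j kt)"
proof -
  have "cellI L j kr \<subseteq> closure (cellI L j kt)"
  proof
    fix z assume "z \<in> cellI L j kr"
    hence "cid L j z = kr" by (simp add: cellI_iff[OF L])
    thus "z \<in> closure (cellI L j kt)" using rt closure_cellI_iff[OF L] by simp
  qed
  hence "closure (cellI L j kr) \<subseteq> closure (cellI L j kt)" by (simp add: closure_minimal)
  hence sub: "Xclosed L j (XCk L j kr) \<subseteq> Xclosed L j (XCk L j kt)" unfolding XC[OF L] by (rule image_mono)
  have "Xcell L j 1 (XCk L j kr)" using d Xcell_iff[OF L] by blast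
  moreover have "XcellAny L j (XCk L j kr)" "XcellAny L j (XCk L j kt)" using XcellAny_iff[OF L] by blast+
  moreover have "v \<in> Xclosed L j (XCk L j kr)" "v \<in> Xclosed L j (XCk L j kt)"
    using v_in_Xclosed[OF L q] f1 f2 by blast+
  ultimately show ?thesis unfolding Adj_def using sub by blast
qed

definition vp :: "nat \<Rightarrow> int \<Rightarrow> int \<Rightarrow> int \<Rightarrow> real \<times> real" where
  "vp L j a b = (of_int a * ux j, of_int b * wy L j)"

definition kU :: "int \<Rightarrow> int \<Rightarrow> kidx" where "kU a b = ((a,False),(b,True))"
definition kD :: "int \<Rightarrow> int \<Rightarrow> kidx" where "kD a b = ((a,False),(b-1,True))"

lemma cid_vp: "L > 0 \<Longrightarrow> cid L j (vp L j a b) = ((a,False),(b,False))"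
  using cellI_iff[of L "vp L j a b" j "((a,False),(b,False))"] by (simp add: vp_def cellI_def C1_def)

lemma star_conn:
  assumes L: "L > 0" and q: "hatpi L j (vp L j a b) = v" and k: "k \<in> star2 ((a,False),(b,False))" and kn: "k \<noteq> ((a,False),(b,False))"
  shows "(Adj L j v)\<^sup>*\<^sup>* (XCk L j (kU a b)) (XCk L j k)"
proof -
  note cq = cid_vp[OF L, of j a b]
  let ?A = "Adj L j v"
  define U where "U = ((a,False),(b,True))"
  define D where "D = ((a,False),(b-1,True))"
  define R where "R = ((a,True),(b,False))"
  define Lf where "Lf = ((a-1,True),(b,False))"
  define NE where "NE = ((a,True),(b,True))"
  define NW where "NW = ((a-1,True),(b,True))"
  define SE where "SE = ((a,True),(b-1,True))"
  define SW where "SW = ((a-1,True),(b-1,True))"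
  have fa: "\<And>kk. kk \<in> {U,D,R,Lf,NE,NW,SE,SW} \<Longrightarrow> cid L j (vp L j a b) \<in> faces2 kk"
    unfolding cq by (auto simp: U_def D_def R_def Lf_def NE_def NW_def SE_def SW_def faces2_def faces1_def)
  have d1: "dimK U = 1" "dimK D = 1" "dimK R = 1" "dimK Lf = 1"
    by (simp_all add: U_def D_def R_def Lf_def dimK_def)
  have A1: "?A (XCk L j U) (XCk L j NE)" by (rule Adj_face[OF L q fa fa d1(1)]) (auto simp: U_def NE_def faces2_def faces1_def)
  have A2: "?A (XCk L j U) (XCk L j NW)" by (rule Adj_face[OF L q fa fa d1(1)]) (auto simp: U_def NW_def faces2_def faces1_def)
  have A3: "?A (XCk L j R) (XCk L j NE)" by (rule Adj_face[OF L q fa fa d1(3)]) (auto simp: R_def NE_def faces2_def faces1_def)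
  have A4: "?A (XCk L j Lf) (XCk L j NW)" by (rule Adj_face[OF L q fa fa d1(4)]) (auto simp: Lf_def NW_def faces2_def faces1_def)
  have A5: "?A (XCk L j R) (XCk L j SE)" by (rule Adj_face[OF L q fa fa d1(3)]) (auto simp: R_def SE_def faces2_def faces1_def)
  have A6: "?A (XCk L j Lf) (XCk L j SW)" by (rule Adj_face[OF L q fa fa d1(4)]) (auto simp: Lf_def SW_def faces2_def faces1_def)
  have A7: "?A (XCk L j D) (XCk L j SE)" by (rule Adj_face[OF L q fa fa d1(2)]) (auto simp: D_def SE_def faces2_def faces1_def)
  have cU: "?A\<^sup>*\<^sup>* (XCk L j U) (XCk L j U)" by simp
  have cNE: "?A\<^sup>*\<^sup>* (XCk L j U) (XCk L j NE)" using A1 by blast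
  have cNW: "?A\<^sup>*\<^sup>* (XCk L j U) (XCk L j NW)" using A2 by blast
  have cR: "?A\<^sup>*\<^sup>* (XCk L j U) (XCk L j R)" using cNE Adj_sym[OF A3] by (meson rtranclp.rtrancl_into_rtrancl)
  have cLf: "?A\<^sup>*\<^sup>* (XCk L j U) (XCk L j Lf)" using cNW Adj_sym[OF A4] by (meson rtranclp.rtrancl_into_rtrancl)
  have cSE: "?A\<^sup>*\<^sup>* (XCk L j U) (XCk L j SE)" using cR A5 by (meson rtranclp.rtrancl_into_rtrancl)
  have cSW: "?A\<^sup>*\<^sup>* (XCk L j U) (XCk L j SW)" using cLf A6 by (meson rtranclp.rtrancl_into_rtrancl)
  have cD: "?A\<^sup>*\<^sup>* (XCk L j U) (XCk L j D)" using cSE Adj_sym[OF A7] by (meson rtranclp.rtrancl_into_rtrancl)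
  have "k \<in> {U,D,R,Lf,NE,NW,SE,SW}" using k kn
    by (auto simp: star2_def star1_def U_def D_def R_def Lf_def NE_def NW_def SE_def SW_def)
  hence "?A\<^sup>*\<^sup>* (XCk L j U) (XCk L j k)" using cU cNE cNW cR cLf cSE cSW cD by blast
  thus ?thesis by (simp add: kU_def U_def)
qed

lemma star_conn_D:
  assumes L: "L > 0" and q: "hatpi L j (vp L j a b) = v"
  shows "(Adj L j v)\<^sup>*\<^sup>* (XCk L j (kU a b)) (XCk L j (kD a b))"
  by (rule star_conn[OF L q]) (auto simp: kD_def star2_def star1_def)

lemma glue_gen:
  assumes L: "L > 0" and ij: "i < j"
    and gen: "\<And>p' q'. blkJ L j Xn c M p' \<Longrightarrow> blkJ L j Xn c M q' \<Longrightarrow> (\<exists>t. snd q' = snd p' + of_int (t*M) * wy L j) \<Longrightarrow> prx L i n l a0 p' q'"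
    and aX: "a = Xn"
    and y1: "of_int (c*M) * wy L j \<le> y1" "y1 \<le> of_int ((c+2)*M) * wy L j"
    and y2: "of_int (c*M) * wy L j \<le> y2" "y2 \<le> of_int ((c+2)*M) * wy L j"
    and t: "y2 = y1 + of_int (t*M) * wy L j"
    and z1: "(of_int a * ux j, y1) \<in> cellI L j k1" and z2: "(of_int a * ux j, y2) \<in> cellI L j k2"
  shows "XCk L j k1 = XCk L j k2"
proof -
  have "prx L i n l a0 (of_int a * ux j, y1) (of_int a * ux j, y2)"
    by (rule gen) (use aX y1 y2 t in \<open>auto simp: blkJ_def\<close>)
  hence "((of_int a * ux j, y1), (of_int a * ux j, y2)) \<in> Rj L j" using Rj_iff[OF L] ij by blast
  from cell_glue[OF L this z1 z2] show ?thesis by simp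
qed

lemma int_mult_le: "(A::int) \<le> B \<Longrightarrow> w > 0 \<Longrightarrow> of_int A * w \<le> of_int B * (w::real)"
  by (simp add: mult_right_mono)

lemma vert_pair:
  assumes L: "L > 0" and ij: "i < j" and h: "prx L i n l a0 (vp L j a b) (vp L j a b')"
  shows "XCk L j (kU a b) = XCk L j (kU a b') \<or> XCk L j (kD a b) = XCk L j (kD a b') \<or>
         (\<exists>b''. prx L i n l a0 (vp L j a b) (vp L j a b'') \<and>
            ((XCk L j (kU a b) = XCk L j (kU a b'') \<and> XCk L j (kD a b'') = XCk L j (kD a b')) \<or>
             (XCk L j (kD a b) = XCk L j (kD a b'') \<and> XCk L j (kU a b'') = XCk L j (kU a b'))))"
proof -
  obtain Xn c M where M1: "M \<ge> 1" and bp: "blkJ L j Xn c M (vp L j a b)" and bq: "blkJ L j Xn c M (vp L j a b')"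
    and tq: "\<exists>t. snd (vp L j a b') = snd (vp L j a b) + of_int (t*M) * wy L j"
    and gen: "\<And>p' q'. blkJ L j Xn c M p' \<Longrightarrow> blkJ L j Xn c M q' \<Longrightarrow> (\<exists>t. snd q' = snd p' + of_int (t*M) * wy L j) \<Longrightarrow> prx L i n l a0 p' q'"
    using prx_units[OF L ij h] by blast
  have w: "wy L j > 0" using wy_pos[OF L] .
  have u: "ux j > 0" using ux_pos .
  have aX: "a = Xn" using bp u by (simp add: blkJ_def vp_def)
  have "real_of_int (c*M) * wy L j \<le> real_of_int b * wy L j" "real_of_int b * wy L j \<le> real_of_int ((c+2)*M) * wy L j"
    using bp unfolding blkJ_def vp_def snd_conv by blast+
  hence rb: "c*M \<le> b" "b \<le> (c+2)*M" using w by (simp_all only: mult_le_cancel_right_pos of_int_le_iff)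
  have "real_of_int (c*M) * wy L j \<le> real_of_int b' * wy L j" "real_of_int b' * wy L j \<le> real_of_int ((c+2)*M) * wy L j"
    using bq unfolding blkJ_def vp_def snd_conv by blast+
  hence rb': "c*M \<le> b'" "b' \<le> (c+2)*M" using w by (simp_all only: mult_le_cancel_right_pos of_int_le_iff)
  obtain t where t: "of_int b' * wy L j = of_int b * wy L j + of_int (t*M) * wy L j" using tq by (auto simp: vp_def)
  hence "real_of_int b' * wy L j = real_of_int (b + t*M) * wy L j" by (simp add: algebra_simps)
  hence "real_of_int b' = real_of_int (b + t*M)" using w by simp
  hence tb: "b' = b + t*M" by (simp only: of_int_eq_iff)
  have glueU: "XCk L j (kU a x) = XCk L j (kU a y)"
    if h: "c*M \<le> x" "x + 1 \<le> (c+2)*M" "c*M \<le> y" "y + 1 \<le> (c+2)*M" "\<exists>s. y = x + s*M" for x y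
  proof -
    obtain s where s: "y = x + s*M" using h by blast
    have a1: "of_int (c*M) * wy L j \<le> (of_int x + 1/2) * wy L j"
    proof -
      have "real_of_int (c*M) \<le> of_int x + 1/2" using h by linarith
      thus ?thesis using w by (simp add: mult_right_mono)
    qed
    have a2: "(of_int x + 1/2) * wy L j \<le> of_int ((c+2)*M) * wy L j"
    proof -
      have "of_int x + 1/2 \<le> real_of_int ((c+2)*M)" using h by linarith
      thus ?thesis using w by (simp add: mult_right_mono)
    qed
    have a3: "of_int (c*M) * wy L j \<le> (of_int y + 1/2) * wy L j"
    proof -
      have "real_of_int (c*M) \<le> of_int y + 1/2" using h by linarith
      thus ?thesis using w by (simp add: mult_right_mono)
    qed
    have a4: "(of_int y + 1/2) * wy L j \<le> of_int ((c+2)*M) * wy L j"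
    proof -
      have "of_int y + 1/2 \<le> real_of_int ((c+2)*M)" using h by linarith
      thus ?thesis using w by (simp add: mult_right_mono)
    qed
    have a5: "(of_int y + 1/2) * wy L j = (of_int x + 1/2) * wy L j + of_int (s*M) * wy L j"
      using s by (simp add: algebra_simps)
    have z1: "(of_int a * ux j, (of_int x + 1/2) * wy L j) \<in> cellI L j (kU a x)"
      using w by (simp add: kU_def cellI_def C1_def mult_strict_right_mono)
    have z2: "(of_int a * ux j, (of_int y + 1/2) * wy L j) \<in> cellI L j (kU a y)"
      using w by (simp add: kU_def cellI_def C1_def mult_strict_right_mono)
    show ?thesis by (rule glue_gen[OF L ij gen aX a1 a2 a3 a4 a5 z1 z2])
  qed
  have glueD: "XCk L j (kD a x) = XCk L j (kD a y)"
    if h: "c*M + 1 \<le> x" "x \<le> (c+2)*M" "c*M + 1 \<le> y" "y \<le> (c+2)*M" "\<exists>s. y = x + s*M" for x y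
  proof -
    obtain s where s: "y = x + s*M" using h by blast
    have a1: "of_int (c*M) * wy L j \<le> (of_int x - 1/2) * wy L j"
    proof -
      have "real_of_int (c*M) \<le> of_int x - 1/2" using h by linarith
      thus ?thesis using w by (simp add: mult_right_mono)
    qed
    have a2: "(of_int x - 1/2) * wy L j \<le> of_int ((c+2)*M) * wy L j"
    proof -
      have "of_int x - 1/2 \<le> real_of_int ((c+2)*M)" using h by linarith
      thus ?thesis using w by (simp add: mult_right_mono)
    qed
    have a3: "of_int (c*M) * wy L j \<le> (of_int y - 1/2) * wy L j"
    proof -
      have "real_of_int (c*M) \<le> of_int y - 1/2" using h by linarith
      thus ?thesis using w by (simp add: mult_right_mono)
    qed
    have a4: "(of_int y - 1/2) * wy L j \<le> of_int ((c+2)*M) * wy L j"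
    proof -
      have "of_int y - 1/2 \<le> real_of_int ((c+2)*M)" using h by linarith
      thus ?thesis using w by (simp add: mult_right_mono)
    qed
    have a5: "(of_int y - 1/2) * wy L j = (of_int x - 1/2) * wy L j + of_int (s*M) * wy L j"
      using s by (simp add: algebra_simps)
    have z1: "(of_int a * ux j, (of_int x - 1/2) * wy L j) \<in> cellI L j (kD a x)"
      using w by (simp add: kD_def cellI_def C1_def mult_strict_right_mono algebra_simps)
    have z2: "(of_int a * ux j, (of_int y - 1/2) * wy L j) \<in> cellI L j (kD a y)"
      using w by (simp add: kD_def cellI_def C1_def mult_strict_right_mono algebra_simps)
    show ?thesis by (rule glue_gen[OF L ij gen aX a1 a2 a3 a4 a5 z1 z2])
  qed
  define B0 where "B0 = c*M"
  define B2 where "B2 = (c+2)*M"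
  have B02: "B2 = B0 + 2*M" by (simp add: B0_def B2_def algebra_simps)
  show ?thesis
  proof (cases "b + 1 \<le> B2 \<and> b' + 1 \<le> B2")
    case True
    have "XCk L j (kU a b) = XCk L j (kU a b')"
      by (rule glueU) (use True rb rb' tb in \<open>auto simp: B2_def\<close>)
    thus ?thesis by blast
  next
    case F1: False
    show ?thesis
    proof (cases "B0 + 1 \<le> b \<and> B0 + 1 \<le> b'")
      case True
      have "XCk L j (kD a b) = XCk L j (kD a b')"
        by (rule glueD) (use True rb rb' tb in \<open>auto simp: B0_def\<close>)
      thus ?thesis by blast
    next
      case F2: False
      define b'' where "b'' = B0 + M"
      have "blkJ L j Xn c M (vp L j a b'')"
      proof -
        have "B0 \<le> b''" "b'' \<le> B2" using M1 B02 by (auto simp: b''_def)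
        hence g1: "c*M \<le> b''" "b'' \<le> (c+2)*M" by (auto simp: B0_def B2_def)
        have f1: "real_of_int (c*M) * wy L j \<le> real_of_int b'' * wy L j" by (rule int_mult_le[OF g1(1) w])
        have f2: "real_of_int b'' * wy L j \<le> real_of_int ((c+2)*M) * wy L j" by (rule int_mult_le[OF g1(2) w])
        show ?thesis unfolding blkJ_def vp_def fst_conv snd_conv aX using f1 f2 by blast
      qed
      have ext: "b = B0 \<and> b' = B2 \<or> b = B2 \<and> b' = B0" using F1 F2 rb rb' M1 B02 by (auto simp: B0_def B2_def)
      hence "\<exists>s. b'' = b + s*M" using B02 by (auto simp: b''_def intro: exI[of _ 1] exI[of _ "-1"])
      then obtain s where s: "b'' = b + s*M" by blast
      have "prx L i n l a0 (vp L j a b) (vp L j a b'')"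
        by (rule gen[OF bp \<open>blkJ L j Xn c M (vp L j a b'')\<close>]) (use s in \<open>auto simp: vp_def algebra_simps intro!: exI[of _ s]\<close>)
      moreover have "(XCk L j (kU a b) = XCk L j (kU a b'') \<and> XCk L j (kD a b'') = XCk L j (kD a b')) \<or>
             (XCk L j (kD a b) = XCk L j (kD a b'') \<and> XCk L j (kU a b'') = XCk L j (kU a b'))"
        using ext
      proof
        assume e: "b = B0 \<and> b' = B2"
        have "XCk L j (kU a b) = XCk L j (kU a b'')"
          by (rule glueU) (use e M1 B02 in \<open>auto simp: b''_def B0_def algebra_simps intro: exI[of _ 1]\<close>)
        moreover have "XCk L j (kD a b'') = XCk L j (kD a b')"
          by (rule glueD) (use e M1 B02 in \<open>auto simp: b''_def B0_def algebra_simps intro: exI[of _ 1]\<close>)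
        ultimately show ?thesis by blast
      next
        assume e: "b = B2 \<and> b' = B0"
        have "XCk L j (kD a b) = XCk L j (kD a b'')"
          by (rule glueD) (use e M1 B02 in \<open>auto simp: b''_def B0_def algebra_simps intro: exI[of _ "-1"]\<close>)
        moreover have "XCk L j (kU a b'') = XCk L j (kU a b')"
          by (rule glueU) (use e M1 B02 in \<open>auto simp: b''_def B0_def algebra_simps intro: exI[of _ "-1"]\<close>)
        ultimately show ?thesis by blast
      qed
      ultimately show ?thesis by metis
    qed
  qed
qed


lemma vertex_of:
  assumes L: "L > 0" and v: "Xcell L j 0 {v}" and s: "Xcell L j d s" and d: "d \<ge> 1" and vs: "v \<in> Xclosed L j s"
  shows "\<exists>a b. hatpi L j (vp L j a b) = v \<and> (Adj L j v)\<^sup>*\<^sup>* (XCk L j (kU a b)) s"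
proof -
  obtain k0 where k0: "dimK k0 = 0" "{v} = XCk L j k0" using v Xcell_iff[OF L] by blast
  obtain q0 where q0: "q0 \<in> cellI L j k0" using cellI_nonempty[OF L] by blast
  have hq0: "hatpi L j q0 = v" using k0(2) q0 by blast
  obtain ks where ks: "dimK ks = d" "s = XCk L j ks" using s Xcell_iff[OF L] by blast
  have "v \<in> hatpi L j ` closure (cellI L j ks)" using vs unfolding ks(2) XC[OF L] .
  then obtain q where q: "q \<in> closure (cellI L j ks)" "hatpi L j q = v" by blast
  have "(q0, q) \<in> Rj L j" using hq0 q(2) hatpi_eq_iff by blast
  hence dq: "dimK (cid L j q) = 0" using cell_glue[OF L _ q0 cid_in[OF L]] k0(1) by simp
  obtain a b tx ty where cq: "cid L j q = ((a,tx),(b,ty))" by (metis prod.collapse)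
  hence ntx: "\<not> tx" "\<not> ty" using dq by (auto simp: dimK_def)
  have "q \<in> cellI L j (cid L j q)" by (rule cid_in[OF L])
  hence qv: "q = vp L j a b" using cq ntx by (auto simp: cellI_def C1_def vp_def mem_Times_iff prod_eq_iff)
  have cq': "cid L j q = ((a,False),(b,False))" using cq ntx by simp
  have "ks \<in> star2 ((a,False),(b,False))" using q(1) closure_cellI_iff[OF L] faces_star2 cq' by metis
  moreover have "ks \<noteq> ((a,False),(b,False))" using ks(1) d by (auto simp: dimK_def)
  ultimately have "(Adj L j v)\<^sup>*\<^sup>* (XCk L j (kU a b)) (XCk L j ks)"
    using star_conn[OF L] q(2) qv by blast
  thus ?thesis using q(2) qv ks(2) by blast
qed

lemma AdjR_trans: "(Adj L j v)\<^sup>*\<^sup>* x y \<Longrightarrow> (Adj L j v)\<^sup>*\<^sup>* y z \<Longrightarrow> (Adj L j v)\<^sup>*\<^sup>* x z"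
  by (rule rtranclp_trans)

lemma U_conn:
  assumes L: "L > 0" and h1: "hatpi L j (vp L j a b) = v" and h2: "hatpi L j (vp L j a' b') = v"
  shows "(Adj L j v)\<^sup>*\<^sup>* (XCk L j (kU a b)) (XCk L j (kU a' b'))"
proof -
  have pq: "(vp L j a b, vp L j a' b') \<in> Rj L j" using h1 h2 hatpi_eq_iff by blast
  show ?thesis
  proof (cases "vp L j a b = vp L j a' b'")
    case True
    hence "cid L j (vp L j a b) = cid L j (vp L j a' b')" by simp
    hence "a = a'" "b = b'" using cid_vp[OF L] by auto
    thus ?thesis by simp
  next
    case False
    then obtain i n l a0 where ij: "i < j" and h: "prx L i n l a0 (vp L j a b) (vp L j a' b')"
      using pq Rj_iff[OF L] by blast
    have "fst (vp L j a' b') = fst (vp L j a b)" using h by (simp add: prx_def onblk_def)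
    hence "of_int a' * ux j = of_int a * ux j" by (simp add: vp_def)
    hence aa: "a' = a" using ux_pos[of j] by simp
    have h': "prx L i n l a0 (vp L j a b) (vp L j a b')" using h aa by simp
    have h2': "hatpi L j (vp L j a b') = v" using h2 aa by simp
    have SU: "(Adj L j v)\<^sup>*\<^sup>* (XCk L j (kU a x)) (XCk L j (kD a x))" if "hatpi L j (vp L j a x) = v" for x
      by (rule star_conn_D[OF L that])
    have "(Adj L j v)\<^sup>*\<^sup>* (XCk L j (kU a b)) (XCk L j (kU a b'))"
      using vert_pair[OF L ij h']
    proof (elim disjE exE conjE)
      assume "XCk L j (kU a b) = XCk L j (kU a b')"
      thus ?thesis by simp
    next
      assume e: "XCk L j (kD a b) = XCk L j (kD a b')"
      have "(Adj L j v)\<^sup>*\<^sup>* (XCk L j (kU a b)) (XCk L j (kD a b'))" using SU[OF h1] e by simp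
      moreover have "(Adj L j v)\<^sup>*\<^sup>* (XCk L j (kD a b')) (XCk L j (kU a b'))" using AdjR_sym[OF SU[OF h2']] .
      ultimately show ?thesis by (rule AdjR_trans)
    next
      fix b'' assume hb: "prx L i n l a0 (vp L j a b) (vp L j a b'')"
        and e1: "XCk L j (kU a b) = XCk L j (kU a b'')" and e2: "XCk L j (kD a b'') = XCk L j (kD a b')"
      have "(vp L j a b, vp L j a b'') \<in> Rj L j" using hb ij Rj_iff[OF L] by blast
      hence h3: "hatpi L j (vp L j a b'') = v" using h1 hatpi_eq_iff by metis
      have "(Adj L j v)\<^sup>*\<^sup>* (XCk L j (kU a b)) (XCk L j (kD a b'))" using SU[OF h3] e1 e2 by simp
      moreover have "(Adj L j v)\<^sup>*\<^sup>* (XCk L j (kD a b')) (XCk L j (kU a b'))" using AdjR_sym[OF SU[OF h2']] .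
      ultimately show ?thesis by (rule AdjR_trans)
    next
      fix b'' assume hb: "prx L i n l a0 (vp L j a b) (vp L j a b'')"
        and e1: "XCk L j (kD a b) = XCk L j (kD a b'')" and e2: "XCk L j (kU a b'') = XCk L j (kU a b')"
      have "(vp L j a b, vp L j a b'') \<in> Rj L j" using hb ij Rj_iff[OF L] by blast
      hence h3: "hatpi L j (vp L j a b'') = v" using h1 hatpi_eq_iff by metis
      have "(Adj L j v)\<^sup>*\<^sup>* (XCk L j (kU a b)) (XCk L j (kD a b''))" using SU[OF h1] e1 by simp
      moreover have "(Adj L j v)\<^sup>*\<^sup>* (XCk L j (kD a b'')) (XCk L j (kU a b'))" using AdjR_sym[OF SU[OF h3]] e2 by simp
      ultimately show ?thesis by (rule AdjR_trans)
    qed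
    thus ?thesis using aa by simp
  qed
qed

lemma claim5:
  assumes L: "L > 0"
  shows "\<forall>v s s'. Xcell L j 0 {v} \<and> (\<exists>d\<ge>1. Xcell L j d s) \<and> (\<exists>d\<ge>1. Xcell L j d s')
        \<and> v \<in> Xclosed L j s \<and> v \<in> Xclosed L j s' \<longrightarrow>
        (\<exists>ts. ts \<noteq> [] \<and> hd ts = s \<and> last ts = s' \<and>
           (\<forall>t\<in>set ts. XcellAny L j t \<and> v \<in> Xclosed L j t) \<and>
           (\<forall>i. Suc i < length ts \<longrightarrow>
              (\<exists>r. Xcell L j 1 r \<and> Xclosed L j r \<subseteq> Xclosed L j (ts ! i)
                   \<and> Xclosed L j r \<subseteq> Xclosed L j (ts ! Suc i))))"
proof (intro allI impI)
  fix v s s'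
  assume H: "Xcell L j 0 {v} \<and> (\<exists>d\<ge>1. Xcell L j d s) \<and> (\<exists>d\<ge>1. Xcell L j d s') \<and> v \<in> Xclosed L j s \<and> v \<in> Xclosed L j s'"
  then obtain d d' where v: "Xcell L j 0 {v}" and s: "Xcell L j d s" "d \<ge> 1" and s': "Xcell L j d' s'" "d' \<ge> 1"
    and vs: "v \<in> Xclosed L j s" and vs': "v \<in> Xclosed L j s'" by blast
  obtain a b where ab: "hatpi L j (vp L j a b) = v" "(Adj L j v)\<^sup>*\<^sup>* (XCk L j (kU a b)) s"
    using vertex_of[OF L v s vs] by blast
  obtain a' b' where ab': "hatpi L j (vp L j a' b') = v" "(Adj L j v)\<^sup>*\<^sup>* (XCk L j (kU a' b')) s'"
    using vertex_of[OF L v s' vs'] by blast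
  have "(Adj L j v)\<^sup>*\<^sup>* s (XCk L j (kU a b))" using AdjR_sym[OF ab(2)] .
  also have "(Adj L j v)\<^sup>*\<^sup>* (XCk L j (kU a b)) (XCk L j (kU a' b'))" by (rule U_conn[OF L ab(1) ab'(1)])
  also have "(Adj L j v)\<^sup>*\<^sup>* (XCk L j (kU a' b')) s'" by (rule ab'(2))
  finally have R: "(Adj L j v)\<^sup>*\<^sup>* s s'" .
  have "XcellAny L j s" using s by (auto simp: XcellAny_def)
  thus "\<exists>ts. ts \<noteq> [] \<and> hd ts = s \<and> last ts = s' \<and>
           (\<forall>t\<in>set ts. XcellAny L j t \<and> v \<in> Xclosed L j t) \<and>
           (\<forall>i. Suc i < length ts \<longrightarrow>
              (\<exists>r. Xcell L j 1 r \<and> Xclosed L j r \<subseteq> Xclosed L j (ts ! i)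
                   \<and> Xclosed L j r \<subseteq> Xclosed L j (ts ! Suc i)))"
    using chain_of_AdjR[OF R _ vs] by blast
qed

theorem mainTheorem5:
  fixes L :: nat
  assumes "L \<ge> 100"
  shows "(\<forall>j :: int.
    \<comment> \<open>(1)\<close>
    inj_on (pij L j) (skel1 L j)
    \<comment> \<open>(2)\<close>
  \<and> (\<forall>p \<in> X L j. Xcell L j 0 {p} \<longrightarrow> {q \<in> X L j. pij L j q = pij L j p} = {p})
    \<comment> \<open>(3)\<close>
  \<and> (\<forall>p \<in> X L j. finite {x. hatpi L j x = p} \<and> card {x. hatpi L j x = p} \<le> 3)
    \<comment> \<open>(4)\<close>
  \<and> (\<forall>c. XcellAny L j c \<longrightarrow> finite (link L j c) \<and> card (link L j c) \<le> 24)
    \<comment> \<open>(5)\<close>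
  \<and> (\<forall>v s s'. Xcell L j 0 {v} \<and> (\<exists>d\<ge>1. Xcell L j d s) \<and> (\<exists>d\<ge>1. Xcell L j d s')
        \<and> v \<in> Xclosed L j s \<and> v \<in> Xclosed L j s' \<longrightarrow>
        (\<exists>ts. ts \<noteq> [] \<and> hd ts = s \<and> last ts = s' \<and>
           (\<forall>t\<in>set ts. XcellAny L j t \<and> v \<in> Xclosed L j t) \<and>
           (\<forall>i. Suc i < length ts \<longrightarrow>
              (\<exists>r. Xcell L j 1 r \<and> Xclosed L j r \<subseteq> Xclosed L j (ts ! i)
                   \<and> Xclosed L j r \<subseteq> Xclosed L j (ts ! Suc i)))))
    \<comment> \<open>(6)\<close>
  \<and> (\<forall>c. XcellAny L j c \<longrightarrow>
        finite {c'. XcellAny L j c' \<and> c' \<subseteq> Xclosed L j c}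
      \<and> card {c'. XcellAny L j c' \<and> c' \<subseteq> Xclosed L j c} \<le> 9)
    \<comment> \<open>(8)\<close>
  \<and> (\<forall>c. Xcell L j 2 c \<longrightarrow>
        (\<exists>F. finite F \<and> card F \<le> 27 \<and> (\<forall>e\<in>F. \<exists>e0. Ycell L j 2 e0 \<and> e = closure e0) \<and>
             {x. hatpi L j x \<in> Xclosed L j c} \<subseteq> \<Union>F)))
    \<comment> \<open>(7)\<close>
  \<and> (\<forall>N. \<exists>C :: nat. \<forall>(j :: int) c. XcellAny L j c \<longrightarrow>
        finite {c'. XcellAny L j c' \<and> c' \<subseteq> cball_comb L j N c}
      \<and> card {c'. XcellAny L j c' \<and> c' \<subseteq> cball_comb L j N c} \<le> C)"
proof -
  have L: "L > 0" using assms by simp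
  show ?thesis
  proof (rule conjI)
    show "\<forall>j::int. inj_on (pij L j) (skel1 L j)
  \<and> (\<forall>p \<in> X L j. Xcell L j 0 {p} \<longrightarrow> {q \<in> X L j. pij L j q = pij L j p} = {p})
  \<and> (\<forall>p \<in> X L j. finite {x. hatpi L j x = p} \<and> card {x. hatpi L j x = p} \<le> 3)
  \<and> (\<forall>c. XcellAny L j c \<longrightarrow> finite (link L j c) \<and> card (link L j c) \<le> 24)
  \<and> (\<forall>v s s'. Xcell L j 0 {v} \<and> (\<exists>d\<ge>1. Xcell L j d s) \<and> (\<exists>d\<ge>1. Xcell L j d s')
        \<and> v \<in> Xclosed L j s \<and> v \<in> Xclosed L j s' \<longrightarrow>
        (\<exists>ts. ts \<noteq> [] \<and> hd ts = s \<and> last ts = s' \<and>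
           (\<forall>t\<in>set ts. XcellAny L j t \<and> v \<in> Xclosed L j t) \<and>
           (\<forall>i. Suc i < length ts \<longrightarrow>
              (\<exists>r. Xcell L j 1 r \<and> Xclosed L j r \<subseteq> Xclosed L j (ts ! i)
                   \<and> Xclosed L j r \<subseteq> Xclosed L j (ts ! Suc i)))))
  \<and> (\<forall>c. XcellAny L j c \<longrightarrow>
        finite {c'. XcellAny L j c' \<and> c' \<subseteq> Xclosed L j c}
      \<and> card {c'. XcellAny L j c' \<and> c' \<subseteq> Xclosed L j c} \<le> 9)
  \<and> (\<forall>c. Xcell L j 2 c \<longrightarrow>
        (\<exists>F. finite F \<and> card F \<le> 27 \<and> (\<forall>e\<in>F. \<exists>e0. Ycell L j 2 e0 \<and> e = closure e0) \<and>
             {x. hatpi L j x \<in> Xclosed L j c} \<subseteq> \<Union>F))"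
    proof (rule allI)
      fix j :: int
      show "inj_on (pij L j) (skel1 L j)
  \<and> (\<forall>p \<in> X L j. Xcell L j 0 {p} \<longrightarrow> {q \<in> X L j. pij L j q = pij L j p} = {p})
  \<and> (\<forall>p \<in> X L j. finite {x. hatpi L j x = p} \<and> card {x. hatpi L j x = p} \<le> 3)
  \<and> (\<forall>c. XcellAny L j c \<longrightarrow> finite (link L j c) \<and> card (link L j c) \<le> 24)
  \<and> (\<forall>v s s'. Xcell L j 0 {v} \<and> (\<exists>d\<ge>1. Xcell L j d s) \<and> (\<exists>d\<ge>1. Xcell L j d s')
        \<and> v \<in> Xclosed L j s \<and> v \<in> Xclosed L j s' \<longrightarrow>
        (\<exists>ts. ts \<noteq> [] \<and> hd ts = s \<and> last ts = s' \<and>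
           (\<forall>t\<in>set ts. XcellAny L j t \<and> v \<in> Xclosed L j t) \<and>
           (\<forall>i. Suc i < length ts \<longrightarrow>
              (\<exists>r. Xcell L j 1 r \<and> Xclosed L j r \<subseteq> Xclosed L j (ts ! i)
                   \<and> Xclosed L j r \<subseteq> Xclosed L j (ts ! Suc i)))))
  \<and> (\<forall>c. XcellAny L j c \<longrightarrow>
        finite {c'. XcellAny L j c' \<and> c' \<subseteq> Xclosed L j c}
      \<and> card {c'. XcellAny L j c' \<and> c' \<subseteq> Xclosed L j c} \<le> 9)
  \<and> (\<forall>c. Xcell L j 2 c \<longrightarrow>
        (\<exists>F. finite F \<and> card F \<le> 27 \<and> (\<forall>e\<in>F. \<exists>e0. Ycell L j 2 e0 \<and> e = closure e0) \<and>
             {x. hatpi L j x \<in> Xclosed L j c} \<subseteq> \<Union>F))"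
    proof -
      have c4: "\<forall>c. XcellAny L j c \<longrightarrow> finite (link L j c) \<and> card (link L j c) \<le> 24"
        using claim4[OF L] by blast
      have c6: "\<forall>c. XcellAny L j c \<longrightarrow>
        finite {c'. XcellAny L j c' \<and> c' \<subseteq> Xclosed L j c}
      \<and> card {c'. XcellAny L j c' \<and> c' \<subseteq> Xclosed L j c} \<le> 9"
        using claim6[OF L] by blast
      have c8: "\<forall>c. Xcell L j 2 c \<longrightarrow>
        (\<exists>F. finite F \<and> card F \<le> 27 \<and> (\<forall>e\<in>F. \<exists>e0. Ycell L j 2 e0 \<and> e = closure e0) \<and>
             {x. hatpi L j x \<in> Xclosed L j c} \<subseteq> \<Union>F)"
        using claim8[OF L] by blast
      show ?thesis
        by (rule conjI[OF claim1[OF L] conjI[OF claim2[OF L] conjI[OF claim3[OF L] conjI[OF c4 conjI[OF claim5[OF L] conjI[OF c6 c8]]]]]])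
    qed
    qed
  next
    show "\<forall>N. \<exists>C :: nat. \<forall>(j :: int) c. XcellAny L j c \<longrightarrow>
        finite {c'. XcellAny L j c' \<and> c' \<subseteq> cball_comb L j N c}
      \<and> card {c'. XcellAny L j c' \<and> c' \<subseteq> cball_comb L j N c} \<le> C"
      using claim7[OF L] by blast
  qed
qed


end
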